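(* Let $p$ be a prime and $V$ a vector space of dimension $d$ over $\mathbb{F}_p$. Let $G_0\le \mathrm{GL}(V)$ be a solvable group acting irreducibly and quasi-primitively on $V$, let $G=V\rtimes G_0$, and let $W$, $A$, $F$, $e$ be structure data for $G_0$ as described in the context. Then \[ \mathrm{rank}(G)\;\ge\;\left\lceil \frac{|W|^{e}-1}{\log_2(|W|)\cdot |A/F|\cdot e^2\cdot (|W|-1)}\right\rceil+1 . \]
   Context: $G=V\rtimes G_0$ is regarded as a permutation group on $V$ (translations together with the linear action of $G_0$). The rank of $G$, $\mathrm{rank}(G)$, is the number of orbits of $G_0$ on $V$, including the orbit $\{0\}$. $G_0$ is quasi-primitive on $V$: every normal subgroup of $G_0$ acts homogeneously on $V$ (the restriction of $V$ to it is a direct sum of pairwise isomorphic irreducible modules). Structure data: subgroups $Z(E)\le U\le F\le A\le G_0$, each normal in $G_0$, and a characteristic subgroup $E$ of $F$, such that: (i) $F=EU$ is a central product with $E\cap U=Z(E)$; (ii) $F/U\cong E/Z(E)$ and $E/Z(E)$ is a direct sum of completely reducible $G_0/F$-modules (action by conjugation); (iii) $E=E_1\times\cdots\times E_s$ with $E_i$ an extraspecial $q_i$-group of order $q_i^{2m_i+1}$, the $q_i$ distinct primes and $m_i\ge 1$; $e:=\prod_i q_i^{m_i}$ (so $|E/Z(E)|=e^2$), $e\mid d$ and $\gcd(p,e)=1$; (iv) $A=C_{G_0}(U)$ and $A/F$ acts faithfully on $E/Z(E)$; (v) $U$ is cyclic and acts fixed-point-freely on $W$, an irreducible $\mathbb{F}_pU$-submodule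 of $V$; (vi) $|U|$ divides $p^k-1$ for some integer $k\ge1$, and $W$ is identified with the $\mathbb{F}_p$-span of $U$, isomorphic to $\mathbb{F}_{p^k}$, so $|W|=p^k$; (vii) $|V|=|W|^{eb}$ for some positive integer $b$, so $d=bke$. (Such data exist for every finite solvable irreducible quasi-primitive linear group, by a known structure theorem.) *)

theory Defs
  imports "HOL-Algebra.Algebra" Complex_Main
begin

section \<open>The vector space V = F_p^d (coordinates in {0..<p}, zero beyond d)\<close>

type_synonym vec = "nat \<Rightarrow> nat"
type_synonym lmap = "vec \<Rightarrow> vec"

definition vecs :: "nat \<Rightarrow> nat \<Rightarrow> vec set" where
  "vecs p d = {v. (\<forall>i<d. v i < p) \<and> (\<forall>i\<ge>d. v i = 0)}"

definition vzero :: vec where "vzero = (\<lambda>_. 0)"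

definition vadd :: "nat \<Rightarrow> vec \<Rightarrow> vec \<Rightarrow> vec" where
  "vadd p v w = (\<lambda>i. (v i + w i) mod p)"

definition vsmul :: "nat \<Rightarrow> nat \<Rightarrow> vec \<Rightarrow> vec" where
  "vsmul p c v = (\<lambda>i. (c * v i) mod p)"

definition vsum :: "nat \<Rightarrow> 'i set \<Rightarrow> ('i \<Rightarrow> vec) \<Rightarrow> vec" where
  "vsum p I w = (\<lambda>k. sum (\<lambda>i. w i k) I mod p)"

definition linear_on :: "nat \<Rightarrow> vec set \<Rightarrow> vec set \<Rightarrow> lmap \<Rightarrow> bool" where
  "linear_on p XX YY f \<longleftrightarrow> f \<in> Pi XX (\<lambda>_. YY) \<and>
     (\<forall>v\<in>XX. \<forall>w\<in>XX. f (vadd p v w) = vadd p (f v) (f w)) \<and>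
     (\<forall>c<p. \<forall>v\<in>XX. f (vsmul p c v) = vsmul p c (f v))"

definition GL :: "nat \<Rightarrow> nat \<Rightarrow> lmap set" where
  "GL p d = {f. linear_on p (vecs p d) (vecs p d) f \<and> bij_betw f (vecs p d) (vecs p d)
                 \<and> f \<in> extensional (vecs p d)}"

definition GLgrp :: "nat \<Rightarrow> nat \<Rightarrow> lmap monoid" where
  "GLgrp p d = \<lparr>carrier = GL p d, monoid.mult = (\<lambda>f g. compose (vecs p d) f g),
                monoid.one = restrict id (vecs p d)\<rparr>"

definition subspace_of :: "nat \<Rightarrow> nat \<Rightarrow> vec set \<Rightarrow> bool" where
  "subspace_of p d W \<longleftrightarrow> W \<subseteq> vecs p d \<and> vzero \<in> W \<and>
     (\<forall>v\<in>W. \<forall>w\<in>W. vadd p v w \<in> W) \<and> (\<forall>c<p. \<forall>v\<in>W. vsmul p c v \<in> W)"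

definition invariant :: "lmap set \<Rightarrow> vec set \<Rightarrow> bool" where
  "invariant S W \<longleftrightarrow> (\<forall>g\<in>S. \<forall>w\<in>W. g w \<in> W)"

definition irr_submodule :: "nat \<Rightarrow> nat \<Rightarrow> lmap set \<Rightarrow> vec set \<Rightarrow> bool" where
  "irr_submodule p d S W \<longleftrightarrow> subspace_of p d W \<and> invariant S W \<and> W \<noteq> {vzero} \<and>
     (\<forall>XX. subspace_of p d XX \<and> XX \<subseteq> W \<and> invariant S XX \<longrightarrow> XX = {vzero} \<or> XX = W)"

definition iso_submodules :: "nat \<Rightarrow> lmap set \<Rightarrow> vec set \<Rightarrow> vec set \<Rightarrow> bool" where
  "iso_submodules p S W1 W2 \<longleftrightarrow> (\<exists>\<phi>. bij_betw \<phi> W1 W2 \<and> linear_on p W1 W2 \<phi> \<and>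
     (\<forall>g\<in>S. \<forall>w\<in>W1. \<phi> (g w) = g (\<phi> w)))"

text \<open>V restricted to S is a direct sum of pairwise isomorphic irreducible S-modules.\<close>
definition homogeneous :: "nat \<Rightarrow> nat \<Rightarrow> lmap set \<Rightarrow> bool" where
  "homogeneous p d S \<longleftrightarrow> (\<exists>(I::nat set) Ws. finite I \<and>
     (\<forall>i\<in>I. irr_submodule p d S (Ws i)) \<and>
     (\<forall>i\<in>I. \<forall>j\<in>I. iso_submodules p S (Ws i) (Ws j)) \<and>
     bij_betw (vsum p I) (Pi\<^sub>E I Ws) (vecs p d))"

definition quasi_primitive :: "nat \<Rightarrow> nat \<Rightarrow> lmap set \<Rightarrow> bool" where
  "quasi_primitive p d G0 \<longleftrightarrow>
     (\<forall>N. N \<lhd> (GLgrp p d)\<lparr>carrier := G0\<rparr> \<longrightarrow> homogeneous p d N)"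

text \<open>rank(V \<rtimes> G0) = number of G0-orbits on V.\<close>
definition rank_affine :: "nat \<Rightarrow> nat \<Rightarrow> lmap set \<Rightarrow> nat" where
  "rank_affine p d G0 = card ((\<lambda>v. (\<lambda>g. g v) ` G0) ` vecs p d)"

definition centre :: "('a, 'b) monoid_scheme \<Rightarrow> 'a set \<Rightarrow> 'a set" where
  "centre G H = {z\<in>H. \<forall>h\<in>H. z \<otimes>\<^bsub>G\<^esub> h = h \<otimes>\<^bsub>G\<^esub> z}"

definition centralizer_in :: "('a, 'b) monoid_scheme \<Rightarrow> 'a set \<Rightarrow> 'a set \<Rightarrow> 'a set" where
  "centralizer_in G H U = {g\<in>H. \<forall>u\<in>U. g \<otimes>\<^bsub>G\<^esub> u = u \<otimes>\<^bsub>G\<^esub> g}"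

definition maximal_subgroup :: "('a, 'b) monoid_scheme \<Rightarrow> 'a set \<Rightarrow> 'a set \<Rightarrow> bool" where
  "maximal_subgroup G H M \<longleftrightarrow> subgroup M G \<and> M \<subset> H \<and>
     (\<forall>K. subgroup K G \<and> M \<subseteq> K \<and> K \<subseteq> H \<longrightarrow> K = M \<or> K = H)"

definition frattini :: "('a, 'b) monoid_scheme \<Rightarrow> 'a set \<Rightarrow> 'a set" where
  "frattini G H = H \<inter> \<Inter> {M. maximal_subgroup G H M}"

definition extraspecial :: "('a, 'b) monoid_scheme \<Rightarrow> 'a set \<Rightarrow> nat \<Rightarrow> nat \<Rightarrow> bool" where
  "extraspecial G P q m \<longleftrightarrow> subgroup P G \<and> Factorial_Ring.prime q \<and> card P = q ^ (2 * m + 1) \<and>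
     card (centre G P) = q \<and> derived G P = centre G P \<and> frattini G P = centre G P"

definition characteristic :: "('a, 'b) monoid_scheme \<Rightarrow> 'a set \<Rightarrow> 'a set \<Rightarrow> bool" where
  "characteristic G E F \<longleftrightarrow>
     (\<forall>\<phi>\<in>iso (G\<lparr>carrier := F\<rparr>) (G\<lparr>carrier := F\<rparr>). \<phi> ` E = E)"

definition conj_invariant :: "('a, 'b) monoid_scheme \<Rightarrow> 'a set \<Rightarrow> 'a set \<Rightarrow> bool" where
  "conj_invariant G H XX \<longleftrightarrow>
     (\<forall>g\<in>H. \<forall>x\<in>XX. g \<otimes>\<^bsub>G\<^esub> x \<otimes>\<^bsub>G\<^esub> inv\<^bsub>G\<^esub> g \<in> XX)"

text \<open>The section E/Z (Z normal in E) is completely reducible under conjugation by H: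
  every H-invariant subgroup between Z and E has an H-invariant complement mod Z.\<close>
definition compl_reducible_section ::
    "('a, 'b) monoid_scheme \<Rightarrow> 'a set \<Rightarrow> 'a set \<Rightarrow> 'a set \<Rightarrow> bool" where
  "compl_reducible_section G H E Z \<longleftrightarrow>
     (\<forall>XX. subgroup XX G \<and> Z \<subseteq> XX \<and> XX \<subseteq> E \<and> conj_invariant G H XX \<longrightarrow>
        (\<exists>YY. subgroup YY G \<and> Z \<subseteq> YY \<and> YY \<subseteq> E \<and> conj_invariant G H YY \<and>
             XX \<inter> YY = Z \<and> XX <#>\<^bsub>G\<^esub> YY = E))"

definition gprod :: "('a, 'b) monoid_scheme \<Rightarrow> nat \<Rightarrow> (nat \<Rightarrow> 'a) \<Rightarrow> 'a" where
  "gprod G s x = foldr (\<lambda>i acc. x i \<otimes>\<^bsub>G\<^esub> acc) [0..<s] \<one>\<^bsub>G\<^esub>"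

definition internal_direct_product ::
    "('a, 'b) monoid_scheme \<Rightarrow> 'a set \<Rightarrow> nat \<Rightarrow> (nat \<Rightarrow> 'a set) \<Rightarrow> bool" where
  "internal_direct_product G E s Es \<longleftrightarrow>
     (\<forall>i<s. subgroup (Es i) G) \<and>
     (\<forall>i<s. \<forall>j<s. i \<noteq> j \<longrightarrow> (\<forall>x\<in>Es i. \<forall>y\<in>Es j. x \<otimes>\<^bsub>G\<^esub> y = y \<otimes>\<^bsub>G\<^esub> x)) \<and>
     bij_betw (gprod G s) (Pi\<^sub>E {..<s} Es) E"

end

theory Submission
  imports Defs "HOL-Computational_Algebra.Polynomial" "HOL-Algebra.Multiplicative_Group"
begin


lemma vecs_lt: "v \<in> vecs p d \<Longrightarrow> 0 < p \<Longrightarrow> v i < p"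
  unfolding vecs_def by (cases "i < d") auto

lemma vecs_mod: "v \<in> vecs p d \<Longrightarrow> 0 < p \<Longrightarrow> v i mod p = v i"
  using vecs_lt by simp

lemma vecs_finite: assumes "0 < p" shows "finite (vecs p d)"
proof -
  have "vecs p d \<subseteq> (\<lambda>f i. if i < d then f i else 0) ` (PiE {..<d} (\<lambda>_. {..<p}))"
  proof
    fix v assume v: "v \<in> vecs p d"
    show "v \<in> (\<lambda>f i. if i < d then f i else 0) ` (PiE {..<d} (\<lambda>_. {..<p}))"
      apply (rule image_eqI[where x="restrict v {..<d}"])
      using v vecs_lt[OF v \<open>0 < p\<close>] by (auto simp: vecs_def fun_eq_iff PiE_def extensional_def)
  qed
  moreover have "finite (PiE {..<d} (\<lambda>_. {..<p}))" by (rule finite_PiE) auto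
  ultimately show ?thesis by (meson finite_surj)
qed

lemma vzero_vecs: "0 < p \<Longrightarrow> vzero \<in> vecs p d"
  by (simp add: vecs_def vzero_def)


lemma vadd_in: "v \<in> vecs p d \<Longrightarrow> w \<in> vecs p d \<Longrightarrow> 0 < p \<Longrightarrow> vadd p v w \<in> vecs p d"
  by (auto simp: vecs_def vadd_def)

lemma vsmul_in: "v \<in> vecs p d \<Longrightarrow> 0 < p \<Longrightarrow> vsmul p c v \<in> vecs p d"
  by (auto simp: vecs_def vsmul_def)

lemma vadd_zero_left: "v \<in> vecs p d \<Longrightarrow> 0 < p \<Longrightarrow> vadd p vzero v = v"
  by (simp add: vadd_def vzero_def vecs_mod fun_eq_iff)

lemma vadd_zero_right: "v \<in> vecs p d \<Longrightarrow> 0 < p \<Longrightarrow> vadd p v vzero = v"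
  by (simp add: vadd_def vzero_def vecs_mod fun_eq_iff)

lemma vsmul_zero: "vsmul p 0 v = vzero"
  by (simp add: vsmul_def vzero_def)

lemma vsmul_vzero: "vsmul p c vzero = vzero"
  by (simp add: vsmul_def vzero_def)

lemma linear_zero:
  assumes "linear_on p XX YY f" "vzero \<in> XX" "0 < p"
  shows "f vzero = vzero"
proof -
  have "f (vsmul p 0 vzero) = vsmul p 0 (f vzero)" using assms unfolding linear_on_def by blast
  thus ?thesis by (simp add: vsmul_zero)
qed

lemma GL_finite: assumes p: "0 < p" shows "finite (GL p d)"
proof -
  have "GL p d \<subseteq> PiE (vecs p d) (\<lambda>_. vecs p d)"
    unfolding GL_def linear_on_def PiE_def by auto
  moreover have "finite (PiE (vecs p d) (\<lambda>_. vecs p d))" using vecs_finite[OF p] by (intro finite_PiE) auto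
  ultimately show ?thesis by (rule finite_subset)
qed

lemma GL_linear: "f \<in> GL p d \<Longrightarrow> linear_on p (vecs p d) (vecs p d) f"
  by (simp add: GL_def)

lemma GL_bij: "f \<in> GL p d \<Longrightarrow> bij_betw f (vecs p d) (vecs p d)"
  by (simp add: GL_def)

lemma GL_ext: "f \<in> GL p d \<Longrightarrow> f \<in> extensional (vecs p d)"
  by (simp add: GL_def)

lemma GL_in: "f \<in> GL p d \<Longrightarrow> v \<in> vecs p d \<Longrightarrow> f v \<in> vecs p d"
  by (simp add: GL_def linear_on_def Pi_def)

lemma GL_add: "f \<in> GL p d \<Longrightarrow> v \<in> vecs p d \<Longrightarrow> w \<in> vecs p d \<Longrightarrow> f (vadd p v w) = vadd p (f v) (f w)"
  by (simp add: GL_def linear_on_def)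

lemma GL_smul: "f \<in> GL p d \<Longrightarrow> c < p \<Longrightarrow> v \<in> vecs p d \<Longrightarrow> f (vsmul p c v) = vsmul p c (f v)"
  by (simp add: GL_def linear_on_def)


lemma GL_compose: assumes "f \<in> GL p d" "g \<in> GL p d" "0 < p" shows "compose (vecs p d) f g \<in> GL p d"
proof -
  have "linear_on p (vecs p d) (vecs p d) (compose (vecs p d) f g)"
    unfolding linear_on_def
  proof (intro conjI ballI allI impI)
    show "compose (vecs p d) f g \<in> vecs p d \<rightarrow> vecs p d"
      using assms by (auto simp: compose_def GL_in)
    fix v w assume v: "v \<in> vecs p d" and w: "w \<in> vecs p d"
    show "compose (vecs p d) f g (vadd p v w) = vadd p (compose (vecs p d) f g v) (compose (vecs p d) f g w)"
      using assms v w by (simp add: compose_def vadd_in GL_add GL_in)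
  next
    fix c v assume c: "c < p" and v: "v \<in> vecs p d"
    show "compose (vecs p d) f g (vsmul p c v) = vsmul p c (compose (vecs p d) f g v)"
      using assms v c by (simp add: compose_def vsmul_in GL_smul GL_in)
  qed
  moreover have "bij_betw (compose (vecs p d) f g) (vecs p d) (vecs p d)"
  proof -
    have "bij_betw (f \<circ> g) (vecs p d) (vecs p d)"
      using assms by (meson GL_bij bij_betw_trans)
    thus ?thesis by (rule bij_betw_cong[THEN iffD1, rotated]) (simp add: compose_def)
  qed
  ultimately show ?thesis by (simp add: GL_def compose_extensional)
qed

lemma GL_id: "0 < p \<Longrightarrow> restrict id (vecs p d) \<in> GL p d"
  unfolding GL_def linear_on_def
  by (auto simp: vadd_in vsmul_in bij_betw_def inj_on_def)

lemma GLgrp_group: assumes p: "0 < p" shows "group (GLgrp p d)"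
proof (rule groupI)
  fix x y assume "x \<in> carrier (GLgrp p d)" "y \<in> carrier (GLgrp p d)"
  thus "x \<otimes>\<^bsub>GLgrp p d\<^esub> y \<in> carrier (GLgrp p d)" using p by (simp add: GLgrp_def GL_compose)
next
  show "\<one>\<^bsub>GLgrp p d\<^esub> \<in> carrier (GLgrp p d)" using p by (simp add: GLgrp_def GL_id)
next
  fix x y z assume "x \<in> carrier (GLgrp p d)" "y \<in> carrier (GLgrp p d)" "z \<in> carrier (GLgrp p d)"
  thus "x \<otimes>\<^bsub>GLgrp p d\<^esub> y \<otimes>\<^bsub>GLgrp p d\<^esub> z = x \<otimes>\<^bsub>GLgrp p d\<^esub> (y \<otimes>\<^bsub>GLgrp p d\<^esub> z)"
    by (simp add: GLgrp_def compose_def fun_eq_iff GL_in)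
next
  fix x assume "x \<in> carrier (GLgrp p d)"
  hence x: "x \<in> GL p d" by (simp add: GLgrp_def)
  show "\<one>\<^bsub>GLgrp p d\<^esub> \<otimes>\<^bsub>GLgrp p d\<^esub> x = x"
    using x GL_ext[OF x] by (auto simp: GLgrp_def compose_def fun_eq_iff GL_in extensional_def)
next
  fix x assume "x \<in> carrier (GLgrp p d)"
  hence x: "x \<in> GL p d" by (simp add: GLgrp_def)
  define V where "V = vecs p d"
  have bx: "bij_betw x V V" using GL_bij[OF x] by (simp add: V_def)
  define y where "y = restrict (inv_into V x) V"
  have by': "bij_betw y V V" unfolding y_def
    using bij_betw_inv_into[OF bx] bij_betw_cong[of V "restrict (inv_into V x) V" "inv_into V x"] by simp
  have yx: "\<And>v. v \<in> V \<Longrightarrow> y (x v) = v" unfolding y_def using bx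
    by (simp add: bij_betw_def bij_betw_apply[OF bx] inv_into_f_f)
  have xy: "\<And>v. v \<in> V \<Longrightarrow> x (y v) = v" unfolding y_def using bx
    by (simp add: bij_betw_def f_inv_into_f)
  have yin: "\<And>v. v \<in> V \<Longrightarrow> y v \<in> V" using by' bij_betwE by blast
  have xl: "linear_on p V V x" using GL_linear[OF x] by (simp add: V_def)
  have "linear_on p V V y" unfolding linear_on_def
  proof (intro conjI ballI allI impI)
    show "y \<in> V \<rightarrow> V" using yin by auto
    fix v w assume v: "v \<in> V" and w: "w \<in> V"
    have "x (vadd p (y v) (y w)) = vadd p v w"
      using xl yin v w xy unfolding linear_on_def by simp
    hence "y (x (vadd p (y v) (y w))) = y (vadd p v w)" by simp
    thus "y (vadd p v w) = vadd p (y v) (y w)" using yx vadd_in yin v w p V_def by metis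
  next
    fix c v assume c: "c < p" and v: "v \<in> V"
    have "x (vsmul p c (y v)) = vsmul p c v"
      using xl yin v xy c unfolding linear_on_def by simp
    hence "y (x (vsmul p c (y v))) = y (vsmul p c v)" by simp
    thus "y (vsmul p c v) = vsmul p c (y v)" using yx vsmul_in yin v p V_def by metis
  qed
  hence yG: "y \<in> GL p d" using by' unfolding GL_def V_def y_def by simp
  show "\<exists>y\<in>carrier (GLgrp p d). y \<otimes>\<^bsub>GLgrp p d\<^esub> x = \<one>\<^bsub>GLgrp p d\<^esub>"
    apply (rule bexI[of _ y])
    using yG yx by (auto simp: GLgrp_def compose_def fun_eq_iff V_def)
qed


definition sc :: "nat \<Rightarrow> int \<Rightarrow> nat" where "sc p a = nat (a mod int p)"

lemma sc_lt: "0 < p \<Longrightarrow> sc p a < p"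
  unfolding sc_def by (simp add: nat_less_iff)

lemma int_sc: "0 < p \<Longrightarrow> int (sc p a) = a mod int p"
  unfolding sc_def by simp

lemma vadd_comm: "vadd p a b = vadd p b a"
  by (simp add: vadd_def add.commute)

lemma vadd_assoc: "vadd p (vadd p a b) c = vadd p a (vadd p b c)"
  by (simp add: vadd_def fun_eq_iff mod_add_left_eq mod_add_right_eq add.assoc)

lemma vadd_lcomm: "vadd p a (vadd p b c) = vadd p b (vadd p a c)"
  by (metis vadd_assoc vadd_comm)

lemmas vadd_ac = vadd_comm vadd_assoc vadd_lcomm

lemma vsmul_vadd: "vsmul p c (vadd p v w) = vadd p (vsmul p c v) (vsmul p c w)"
  by (simp add: vsmul_def vadd_def fun_eq_iff mod_mult_right_eq distrib_left mod_add_eq)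

lemma vsmul_vsmul: "vsmul p c (vsmul p c' v) = vsmul p (c * c') v"
  by (simp add: vsmul_def fun_eq_iff mod_mult_right_eq mult.assoc)

lemma vsmul_comm: "vsmul p c (vsmul p c' v) = vsmul p c' (vsmul p c v)"
  by (simp add: vsmul_vsmul mult.commute)

lemma sc_add: assumes "0 < p" shows "vsmul p (sc p (a + b)) w = vadd p (vsmul p (sc p a) w) (vsmul p (sc p b) w)"
proof -
  have "int ((sc p (a + b) * w i) mod p) = int (((sc p a * w i) mod p + (sc p b * w i) mod p) mod p)" for i
  proof -
    have "int ((sc p (a + b) * w i) mod p) = ((a + b) mod p * int (w i)) mod p"
      using assms by (simp add: int_sc of_nat_mod)
    also have "\<dots> = (a * int (w i) + b * int (w i)) mod p"
      by (simp add: mod_mult_left_eq distrib_right)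
    also have "\<dots> = ((a mod p * int (w i)) mod p + (b mod p * int (w i)) mod p) mod p"
      by (simp add: mod_add_eq mod_mult_left_eq)
    also have "\<dots> = int (((sc p a * w i) mod p + (sc p b * w i) mod p) mod p)"
      using assms by (simp add: int_sc of_nat_mod)
    finally show ?thesis .
  qed
  thus ?thesis by (simp add: vsmul_def vadd_def fun_eq_iff)
qed

lemma sc_mult: assumes "0 < p" shows "vsmul p (sc p (a * b)) w = vsmul p (sc p a) (vsmul p (sc p b) w)"
proof -
  have "int ((sc p (a * b) * w i) mod p) = int ((sc p a * sc p b * w i) mod p)" for i
  proof -
    have "int ((sc p (a * b) * w i) mod p) = ((a * b) mod p * int (w i)) mod p"
      using assms by (simp add: int_sc of_nat_mod)
    also have "\<dots> = ((a mod p) * (b mod p) * int (w i)) mod p"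
      by (metis mod_mult_eq mod_mult_left_eq)
    also have "\<dots> = int ((sc p a * sc p b * w i) mod p)"
      using assms by (simp add: int_sc of_nat_mod)
    finally show ?thesis .
  qed
  thus ?thesis by (simp add: vsmul_def fun_eq_iff mod_mult_right_eq mult.assoc)
qed

definition ev :: "nat \<Rightarrow> lmap \<Rightarrow> int poly \<Rightarrow> lmap" where
  "ev p t P = fold_coeffs (\<lambda>a h w. vadd p (vsmul p (sc p a) w) (t (h w))) P (\<lambda>w. vzero)"

abbreviation lin :: "nat \<Rightarrow> nat \<Rightarrow> lmap \<Rightarrow> bool" where
  "lin p d t \<equiv> linear_on p (vecs p d) (vecs p d) t"

lemma lin_in: "lin p d t \<Longrightarrow> v \<in> vecs p d \<Longrightarrow> t v \<in> vecs p d"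
  by (auto simp: linear_on_def)

lemma lin_add: "lin p d t \<Longrightarrow> v \<in> vecs p d \<Longrightarrow> w \<in> vecs p d \<Longrightarrow> t (vadd p v w) = vadd p (t v) (t w)"
  by (auto simp: linear_on_def)

lemma lin_smul: "lin p d t \<Longrightarrow> c < p \<Longrightarrow> v \<in> vecs p d \<Longrightarrow> t (vsmul p c v) = vsmul p c (t v)"
  by (auto simp: linear_on_def)

lemma lin_zero: "lin p d t \<Longrightarrow> 0 < p \<Longrightarrow> t vzero = vzero"
  using linear_zero vzero_vecs by blast

lemma ev_0[simp]: "ev p t 0 w = vzero"
  by (simp add: ev_def)

lemma ev_pCons:
  assumes "lin p d t" "0 < p"
  shows "ev p t (pCons a P) w = vadd p (vsmul p (sc p a) w) (t (ev p t P w))"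
proof (cases "a = 0 \<and> P = 0")
  case True
  thus ?thesis using assms by (simp add: sc_def vsmul_zero lin_zero vadd_zero_left vzero_vecs)
next
  case False
  thus ?thesis by (auto simp: ev_def)
qed

lemma ev_in:
  assumes "lin p d t" "0 < p" "w \<in> vecs p d"
  shows "ev p t P w \<in> vecs p d"
  by (induction P) (use assms in \<open>auto simp: ev_pCons vzero_vecs vadd_in vsmul_in lin_in\<close>)

lemma vsmul_one: "v \<in> vecs p d \<Longrightarrow> 1 < p \<Longrightarrow> vsmul p 1 v = v"
  by (simp add: vsmul_def vecs_mod fun_eq_iff)

lemma ev_const:
  assumes "lin p d t" "0 < p" "w \<in> vecs p d"
  shows "ev p t [:c:] w = vsmul p (sc p c) w"
  using assms vadd_zero_right[OF vsmul_in[OF assms(3) assms(2)] assms(2)] by (simp add: ev_pCons lin_zero)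

lemma ev_add:
  assumes "lin p d t" "0 < p" "w \<in> vecs p d"
  shows "ev p t (P + Q) w = vadd p (ev p t P w) (ev p t Q w)"
proof (induction P arbitrary: Q)
  case 0
  thus ?case using assms vadd_zero_left[OF ev_in[OF assms] assms(2)] by simp
next
  case (pCons a P)
  obtain b Q' where Q: "Q = pCons b Q'" by (cases Q) auto
  have "ev p t (pCons a P + Q) w = vadd p (vsmul p (sc p (a + b)) w) (t (ev p t (P + Q') w))"
    using assms by (simp add: Q ev_pCons)
  also have "\<dots> = vadd p (vadd p (vsmul p (sc p a) w) (vsmul p (sc p b) w))
                      (vadd p (t (ev p t P w)) (t (ev p t Q' w)))"
    using assms pCons.IH by (simp add: sc_add lin_add ev_in)
  also have "\<dots> = vadd p (ev p t (pCons a P) w) (ev p t Q w)"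
    using assms by (simp add: Q ev_pCons vadd_ac)
  finally show ?case .
qed

lemma ev_smult:
  assumes "lin p d t" "0 < p" "w \<in> vecs p d"
  shows "ev p t (smult c P) w = vsmul p (sc p c) (ev p t P w)"
proof (induction P)
  case 0
  thus ?case using assms by (simp add: vsmul_vzero)
next
  case (pCons a P)
  have "ev p t (smult c (pCons a P)) w = vadd p (vsmul p (sc p (c * a)) w) (t (ev p t (smult c P) w))"
    using assms by (simp add: ev_pCons)
  also have "\<dots> = vadd p (vsmul p (sc p c) (vsmul p (sc p a) w)) (vsmul p (sc p c) (t (ev p t P w)))"
    using assms pCons.IH by (simp add: sc_mult lin_smul sc_lt ev_in)
  also have "\<dots> = vsmul p (sc p c) (ev p t (pCons a P) w)"
    using assms by (simp add: ev_pCons vsmul_vadd)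
  finally show ?case .
qed

lemma ev_pCons0:
  assumes "lin p d t" "0 < p" "w \<in> vecs p d"
  shows "ev p t (pCons 0 P) w = t (ev p t P w)"
  using assms vadd_zero_left[OF lin_in[OF assms(1) ev_in[OF assms]] assms(2)] by (simp add: ev_pCons sc_def vsmul_zero)

lemma ev_mult:
  assumes "lin p d t" "0 < p" "w \<in> vecs p d"
  shows "ev p t (P * Q) w = ev p t P (ev p t Q w)"
proof (induction P)
  case 0
  thus ?case by simp
next
  case (pCons a P)
  have "ev p t (pCons a P * Q) w = vadd p (vsmul p (sc p a) (ev p t Q w)) (t (ev p t (P * Q) w))"
    using assms by (simp add: ev_add ev_smult ev_pCons0 ev_in)
  also have "\<dots> = ev p t (pCons a P) (ev p t Q w)"
    using assms pCons.IH by (simp add: ev_pCons)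
  finally show ?case .
qed

lemma ev_linear:
  assumes "lin p d t" "0 < p"
  shows "lin p d (ev p t P)"
  unfolding linear_on_def
proof (intro conjI ballI allI impI)
  show "ev p t P \<in> vecs p d \<rightarrow> vecs p d" using assms ev_in by blast
  fix v w assume v: "v \<in> vecs p d" and w: "w \<in> vecs p d"
  show "ev p t P (vadd p v w) = vadd p (ev p t P v) (ev p t P w)"
  proof (induction P)
    case 0
    thus ?case using assms by (simp add: vadd_zero_left vzero_vecs)
  next
    case (pCons a P)
    thus ?case using assms v w
      by (simp add: ev_pCons vadd_in vsmul_vadd lin_add ev_in vsmul_in vadd_ac)
  qed
next
  fix c v assume c: "c < p" and v: "v \<in> vecs p d"
  show "ev p t P (vsmul p c v) = vsmul p c (ev p t P v)"
  proof (induction P)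
    case 0
    thus ?case using assms by (simp add: vsmul_vzero)
  next
    case (pCons a P)
    thus ?case using assms v c
      by (simp add: ev_pCons vsmul_in vsmul_vadd lin_smul ev_in vsmul_comm)
  qed
qed

lemma ev_monom:
  assumes "lin p d t" "1 < p" "w \<in> vecs p d"
  shows "ev p t (monom 1 n) w = (t ^^ n) w"
proof (induction n)
  case 0
  have "sc p 1 = 1" using assms by (simp add: sc_def)
  thus ?case using assms vsmul_one[OF assms(3) assms(2)] by (simp add: monom_0 ev_const)
next
  case (Suc n)
  have "monom (1::int) (Suc n) = pCons 0 (monom 1 n)" by (simp add: monom_Suc)
  thus ?case using assms Suc by (simp add: ev_pCons0)
qed

lemma ev_intertwine:
  assumes t1: "lin p d t1" and t2: "lin p d t2" and p: "0 < p"
    and XX: "subspace_of p d XX" and YY: "subspace_of p d YY"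
    and t1X: "\<And>x. x \<in> XX \<Longrightarrow> t1 x \<in> XX"
    and phi: "linear_on p XX YY \<phi>"
    and comm: "\<And>x. x \<in> XX \<Longrightarrow> \<phi> (t1 x) = t2 (\<phi> x)"
    and x: "x \<in> XX"
  shows "ev p t1 P x \<in> XX \<and> \<phi> (ev p t1 P x) = ev p t2 P (\<phi> x)"
proof (induction P)
  case 0
  have "\<phi> vzero = vzero" using linear_zero[OF phi] XX p by (simp add: subspace_of_def)
  thus ?case using XX by (simp add: subspace_of_def)
next
  case (pCons a P)
  have xv: "x \<in> vecs p d" using XX x by (auto simp: subspace_of_def)
  have px: "\<phi> x \<in> YY" using phi x by (auto simp: linear_on_def)
  have X1: "vsmul p (sc p a) x \<in> XX" using XX x sc_lt[OF p] by (simp add: subspace_of_def)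
  have X2: "t1 (ev p t1 P x) \<in> XX" using t1X pCons.IH by blast
  have "ev p t1 (pCons a P) x = vadd p (vsmul p (sc p a) x) (t1 (ev p t1 P x))"
    using t1 p by (simp add: ev_pCons)
  moreover have "vadd p (vsmul p (sc p a) x) (t1 (ev p t1 P x)) \<in> XX"
    using X1 X2 XX by (simp add: subspace_of_def)
  moreover have "\<phi> (vadd p (vsmul p (sc p a) x) (t1 (ev p t1 P x)))
      = vadd p (vsmul p (sc p a) (\<phi> x)) (t2 (\<phi> (ev p t1 P x)))"
    using phi X1 X2 x sc_lt[OF p] comm pCons.IH unfolding linear_on_def by simp
  moreover have "ev p t2 (pCons a P) (\<phi> x) = vadd p (vsmul p (sc p a) (\<phi> x)) (t2 (ev p t2 P (\<phi> x)))"
    using t2 p by (simp add: ev_pCons)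
  ultimately show ?case using pCons.IH by simp
qed

lemma subspace_vecs: "0 < p \<Longrightarrow> subspace_of p d (vecs p d)"
  by (simp add: subspace_of_def vzero_vecs vadd_in vsmul_in)

lemma ev_cong:
  assumes t1: "lin p d t1" and t2: "lin p d t2" and p: "0 < p"
    and eq: "\<And>x. x \<in> vecs p d \<Longrightarrow> t1 x = t2 x" and x: "x \<in> vecs p d"
  shows "ev p t1 P x = ev p t2 P x"
proof -
  have "linear_on p (vecs p d) (vecs p d) id" by (simp add: linear_on_def)
  thus ?thesis using ev_intertwine[OF t1 t2 p subspace_vecs[OF p] subspace_vecs[OF p], of id] eq x
      lin_in[OF t1] by simp
qed

lemma ev_compose:
  assumes u: "lin p d u" and p: "0 < p" and w: "w \<in> vecs p d"
  shows "ev p u (poly (map_poly (\<lambda>c. [:c:]) F) a) w = ev p (ev p u a) F w"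
proof (induction F)
  case 0
  thus ?case by simp
next
  case (pCons c F)
  have ua: "lin p d (ev p u a)" using ev_linear[OF u p] .
  have "poly (map_poly (\<lambda>c. [:c:]) (pCons c F)) a = [:c:] + a * poly (map_poly (\<lambda>c. [:c:]) F) a"
    by (simp add: map_poly_pCons)
  hence "ev p u (poly (map_poly (\<lambda>c. [:c:]) (pCons c F)) a) w
       = vadd p (vsmul p (sc p c) w) (ev p u a (ev p u (poly (map_poly (\<lambda>c. [:c:]) F) a) w))"
    using u p w by (simp add: ev_add ev_const ev_mult ev_in)
  also have "\<dots> = ev p (ev p u a) (pCons c F) w"
    using pCons.IH ua p by (simp add: ev_pCons)
  finally show ?case .
qed


lemma lead_coeff_synthetic_div:
  fixes f :: "'a::comm_ring_1 poly"
  assumes "degree f = Suc n"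
  shows "degree (synthetic_div f c) = n \<and> lead_coeff (synthetic_div f c) = lead_coeff f"
proof -
  define q where "q = synthetic_div f c"
  have dq: "degree q = n" using assms by (simp add: q_def degree_synthetic_div)
  have "coeff (f + smult c q) (Suc n) = coeff (pCons (poly f c) q) (Suc n)"
    using synthetic_div_correct[of f c] by (simp add: q_def)
  hence "coeff f (Suc n) + c * coeff q (Suc n) = coeff q n" by simp
  moreover have "coeff q (Suc n) = 0" using dq by (simp add: coeff_eq_0)
  ultimately show ?thesis using dq assms by (simp add: q_def)
qed

lemma root_bound:
  fixes f :: "'a::comm_ring_1 poly" and I :: "'a set"
  assumes sub: "\<And>x y. x \<in> I \<Longrightarrow> y \<in> I \<Longrightarrow> x - y \<in> I"
    and canc: "\<And>a b h. a \<in> S \<Longrightarrow> b \<in> S \<Longrightarrow> a \<noteq> b \<Longrightarrow> (b - a) * h \<in> I \<Longrightarrow> h \<in> I"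
    and roots: "\<And>a. a \<in> S \<Longrightarrow> poly f a \<in> I"
    and lc: "lead_coeff f \<notin> I"
    and fin: "finite S"
  shows "card S \<le> degree f"
  using roots lc fin canc
proof (induction "degree f" arbitrary: f S)
  case 0
  have "S = {}"
  proof (rule ccontr)
    assume "S \<noteq> {}"
    then obtain a where "a \<in> S" by blast
    hence "poly f a \<in> I" using 0 by blast
    moreover have "poly f a = lead_coeff f"
    proof -
      have "f = [:coeff f 0:]" using 0(1)[symmetric] by (simp add: degree_0_id)
      hence "poly f a = coeff f 0" by (metis poly_pCons poly_0 mult_zero_right add.right_neutral)
      thus ?thesis using 0(1)[symmetric] by simp
    qed
    ultimately show False using 0 by simp
  qed
  thus ?case by simp
next
  case (Suc n)
  show ?case
  proof (cases "S = {}")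
    case True thus ?thesis by simp
  next
    case False
    then obtain a where a: "a \<in> S" by blast
    define q where "q = synthetic_div f a"
    have qd: "degree q = n" and ql: "lead_coeff q = lead_coeff f"
      using lead_coeff_synthetic_div[OF Suc(2)[symmetric], of a] by (auto simp: q_def)
    have eq: "poly f b = (b - a) * poly q b + poly f a" for b
    proof -
      have "poly ([:-a, 1:] * q + [:poly f a:]) b = poly f b"
        using synthetic_div_correct'[of a f] by (simp add: q_def)
      thus ?thesis by (simp add: algebra_simps)
    qed
    have "card (S - {a}) \<le> degree q"
    proof (rule Suc(1))
      show "n = degree q" using qd by simp
      show "lead_coeff q \<notin> I" using ql Suc by simp
      show "finite (S - {a})" using Suc by simp
      fix b assume b: "b \<in> S - {a}"
      have "(b - a) * poly q b = poly f b - poly f a" using eq[of b] by simp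
      also have "\<dots> \<in> I" using sub Suc b a by blast
      finally show "poly q b \<in> I" using Suc(6)[of a b] a b by auto
    next
      fix a' b h assume "a' \<in> S - {a}" "b \<in> S - {a}" "a' \<noteq> b" "(b - a') * h \<in> I"
      thus "h \<in> I" using Suc(6) by blast
    qed
    hence "card S - 1 \<le> n" using a Suc qd by simp
    thus ?thesis using Suc(2) by linarith
  qed
qed


lemma vsum_empty: "vsum p {} w = vzero"
  by (simp add: vsum_def vzero_def)

lemma vsum_insert: "finite I \<Longrightarrow> i \<notin> I \<Longrightarrow> vsum p (insert i I) w = vadd p (w i) (vsum p I w)"
  by (simp add: vsum_def vadd_def fun_eq_iff mod_add_right_eq)

lemma vsum_cong: "(\<And>i. i \<in> I \<Longrightarrow> w i = w' i) \<Longrightarrow> vsum p I w = vsum p I w'"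
  unfolding vsum_def by (intro ext arg_cong[where f="\<lambda>x. x mod p"] sum.cong) auto

lemma vsum_zero: "vsum p I (\<lambda>i. vzero) = vzero"
  by (simp add: vsum_def vzero_def)

lemma vsum_in: "0 < p \<Longrightarrow> (\<And>i. i \<in> I \<Longrightarrow> w i \<in> vecs p d) \<Longrightarrow> vsum p I w \<in> vecs p d"
  unfolding vsum_def vecs_def by auto

lemma lin_vsum:
  assumes L: "lin p d L" and p: "0 < p" and fin: "finite I"
  shows "(\<And>i. i \<in> I \<Longrightarrow> w i \<in> vecs p d) \<Longrightarrow> L (vsum p I w) = vsum p I (\<lambda>i. L (w i))"
  using fin
proof (induction I rule: finite_induct)
  case empty
  thus ?case using lin_zero[OF L p] by (simp add: vsum_empty)
next
  case (insert i I)
  have "L (vsum p (insert i I) w) = L (vadd p (w i) (vsum p I w))" using insert by (simp add: vsum_insert)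
  also have "\<dots> = vadd p (L (w i)) (L (vsum p I w))"
    by (rule lin_add[OF L]) (use insert.prems vsum_in[OF p, of I w d] in auto)
  also have "\<dots> = vadd p (L (w i)) (vsum p I (\<lambda>i. L (w i)))"
    using insert.IH insert.prems by simp
  also have "\<dots> = vsum p (insert i I) (\<lambda>i. L (w i))" using insert by (simp add: vsum_insert)
  finally show ?case .
qed

lemma vadd_cancel:
  assumes "a \<in> vecs p d" "b \<in> vecs p d" "0 < p" "vadd p a b = b"
  shows "a = vzero"
proof
  fix i
  have x: "a i < p" and y: "b i < p" using assms vecs_lt by auto
  have e: "(a i + b i) mod p = b i" using assms(4) by (metis vadd_def)
  show "a i = vzero i"
  proof (cases "a i + b i < p")
    case True thus ?thesis using e by (simp add: vzero_def)
  next
    case False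
    hence "(a i + b i) mod p = (a i + b i - p) mod p" by (simp add: le_mod_geq)
    also have "\<dots> = a i + b i - p" using x y by simp
    finally show ?thesis using e False x by simp
  qed
qed

lemma ev_sub_zero:
  assumes t: "lin p d t" and p: "0 < p" and w: "w \<in> vecs p d"
    and "ev p t P w = ev p t Q w"
  shows "ev p t (P - Q) w = vzero"
proof -
  have "ev p t P w = vadd p (ev p t (P - Q) w) (ev p t Q w)"
    using ev_add[OF t p w, of "P - Q" Q] by simp
  thus ?thesis using vadd_cancel[OF ev_in[OF t p w] ev_in[OF t p w] p] assms(4) by metis
qed

lemma ev_sub_zero_iff:
  assumes t: "lin p d t" and p: "0 < p" and w: "w \<in> vecs p d"
    and "ev p t (P - Q) w = vzero"
  shows "ev p t P w = ev p t Q w"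
proof -
  have "ev p t P w = vadd p (ev p t (P - Q) w) (ev p t Q w)"
    using ev_add[OF t p w, of "P - Q" Q] by simp
  thus ?thesis using assms(4) vadd_zero_left[OF ev_in[OF t p w] p] by simp
qed

lemma ev_commute:
  assumes t: "lin p d t" and p: "0 < p" and w: "w \<in> vecs p d"
  shows "ev p t P (ev p t Q w) = ev p t Q (ev p t P w)"
  using ev_mult[OF t p w, of P Q] ev_mult[OF t p w, of Q P] by (simp add: mult.commute)

lemma ev_invariant:
  assumes t: "lin p d t" and p: "0 < p" and XX: "subspace_of p d XX"
    and tX: "\<And>x. x \<in> XX \<Longrightarrow> t x \<in> XX" and x: "x \<in> XX"
  shows "ev p t P x \<in> XX"
proof -
  have "linear_on p XX XX id" using XX by (auto simp: linear_on_def)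
  thus ?thesis using ev_intertwine[OF t t p XX XX tX, of id x P] x by simp
qed

lemma annihilator_vec:
  assumes p: "Factorial_Ring.prime p" and u: "lin p d u" and W: "subspace_of p d W" and uW: "\<And>w. w \<in> W \<Longrightarrow> u w \<in> W"
    and cW: "card W = p ^ k" and w0: "w0 \<in> W"
  shows "\<exists>F. degree F \<le> k \<and> \<not> int p dvd lead_coeff F \<and> ev p u F w0 = vzero"
proof -
  have p1: "1 < p" using p prime_gt_1_nat by blast
  hence p0: "0 < p" by simp
  have Wv: "W \<subseteq> vecs p d" using W by (simp add: subspace_of_def)
  have finW: "finite W" using vecs_finite[OF p0] Wv finite_subset by blast
  have w0v: "w0 \<in> vecs p d" using w0 Wv by blast
  define C where "C = PiE {..k} (\<lambda>_. {..<p})"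
  define P where "P c = (\<Sum>i\<le>k. monom (int (c i)) i)" for c :: "nat \<Rightarrow> nat"
  have coeffP: "coeff (P c) i = (if i \<le> k then int (c i) else 0)" for c i
    by (simp add: P_def coeff_sum coeff_monom)
  have cardC: "card C = p ^ Suc k" by (simp add: C_def card_PiE)
  have evin: "ev p u Q w0 \<in> W" for Q using ev_invariant[OF u p0 W uW w0] .
  have "\<not> inj_on (\<lambda>c. ev p u (P c) w0) C"
  proof
    assume "inj_on (\<lambda>c. ev p u (P c) w0) C"
    hence "card C \<le> card W" using card_inj_on_le[OF _ _ finW] evin by blast
    thus False using cardC cW p1 by simp
  qed
  then obtain c c' where cC: "c \<in> C" and cC': "c' \<in> C" and cc: "c \<noteq> c'"
    and eq: "ev p u (P c) w0 = ev p u (P c') w0" unfolding inj_on_def by blast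
  define F where "F = P c - P c'"
  have coeffF: "coeff F i = (if i \<le> k then int (c i) - int (c' i) else 0)" for i
    by (simp add: F_def coeffP)
  have degF: "degree F \<le> k" by (rule degree_le) (simp add: coeffF)
  obtain j where j: "c j \<noteq> c' j" using cc by blast
  have jk: "j \<le> k" using j cC cC' unfolding C_def PiE_def extensional_def by fastforce
  have F0: "F \<noteq> 0"
  proof
    assume "F = 0" hence "coeff F j = 0" by simp
    thus False using j jk by (simp add: coeffF)
  qed
  have lc: "\<not> int p dvd lead_coeff F"
  proof
    assume dv: "int p dvd lead_coeff F"
    define m where "m = degree F"
    have mk: "m \<le> k" using degF m_def by simp
    have lcm: "lead_coeff F = int (c m) - int (c' m)" using mk by (simp add: coeffF m_def)
    have "lead_coeff F \<noteq> 0" using F0 by simp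
    hence "\<bar>int p\<bar> \<le> \<bar>lead_coeff F\<bar>" using dv dvd_imp_le_int by blast
    moreover have "c m < p" "c' m < p" using cC cC' mk unfolding C_def by auto
    ultimately show False using lcm by linarith
  qed
  have "ev p u F w0 = vzero" unfolding F_def using ev_sub_zero[OF u p0 w0v eq] .
  thus ?thesis using degF lc by blast
qed


lemma ann_all:
  assumes p: "Factorial_Ring.prime p" and u: "lin p d u"
    and hom: "homogeneous p d U"
    and Upow: "\<And>g. g \<in> U \<Longrightarrow> \<exists>n. \<forall>v\<in>vecs p d. g v = (u ^^ n) v"
    and uU: "u \<in> U"
    and F: "ev p u F w0 = vzero" and w0: "w0 \<in> vecs p d" and w0z: "w0 \<noteq> vzero"
  shows "\<forall>v\<in>vecs p d. ev p u F v = vzero"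
proof -
  have p1: "1 < p" using p prime_gt_1_nat by blast
  hence p0: "0 < p" by simp
  obtain I :: "nat set" and Ws where finI: "finite I"
    and irr: "\<And>i. i \<in> I \<Longrightarrow> irr_submodule p d U (Ws i)"
    and iso: "\<And>i j. i \<in> I \<Longrightarrow> j \<in> I \<Longrightarrow> iso_submodules p U (Ws i) (Ws j)"
    and bij: "bij_betw (vsum p I) (Pi\<^sub>E I Ws) (vecs p d)"
    using hom unfolding homogeneous_def by blast
  have sub: "subspace_of p d (Ws i)" if "i \<in> I" for i using irr[OF that] by (simp add: irr_submodule_def)
  have inv: "invariant U (Ws i)" if "i \<in> I" for i using irr[OF that] by (simp add: irr_submodule_def)
  have Wsv: "Ws i \<subseteq> vecs p d" if "i \<in> I" for i using sub[OF that] by (simp add: subspace_of_def)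
  have uWs: "u x \<in> Ws i" if "i \<in> I" "x \<in> Ws i" for i x using inv[OF that(1)] uU that(2)
    by (simp add: invariant_def)
  have evWs: "ev p u F x \<in> Ws i" if "i \<in> I" "x \<in> Ws i" for i x
    using ev_invariant[OF u p0 sub[OF that(1)] uWs[OF that(1)] that(2)] .
  have evl: "lin p d (ev p u F)" using ev_linear[OF u p0] .
  have ev0: "ev p u F vzero = vzero" using lin_zero[OF evl p0] .
  define K where "K i = {w \<in> Ws i. ev p u F w = vzero}" for i
  have Kc: "K i = {vzero} \<or> K i = Ws i" if i: "i \<in> I" for i
  proof -
    have "subspace_of p d (K i)"
      unfolding subspace_of_def
    proof (intro conjI ballI allI impI)
      show "K i \<subseteq> vecs p d" using Wsv[OF i] by (auto simp: K_def)
      show "vzero \<in> K i" using sub[OF i] ev0 by (simp add: K_def subspace_of_def)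
      fix v w assume v: "v \<in> K i" and w: "w \<in> K i"
      have "v \<in> vecs p d" "w \<in> vecs p d" using v w Wsv[OF i] by (auto simp: K_def)
      thus "vadd p v w \<in> K i" using v w sub[OF i] lin_add[OF evl] vadd_zero_left[OF vzero_vecs[OF p0] p0]
        by (auto simp: K_def subspace_of_def)
    next
      fix c v assume c: "c < p" and v: "v \<in> K i"
      have "v \<in> vecs p d" using v Wsv[OF i] by (auto simp: K_def)
      thus "vsmul p c v \<in> K i" using v c sub[OF i] lin_smul[OF evl] by (auto simp: K_def subspace_of_def vsmul_vzero)
    qed
    moreover have "invariant U (K i)"
      unfolding invariant_def
    proof (intro ballI)
      fix g w assume g: "g \<in> U" and w: "w \<in> K i"
      obtain n where n: "\<forall>v\<in>vecs p d. g v = (u ^^ n) v" using Upow[OF g] by blast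
      have wv: "w \<in> vecs p d" using w Wsv[OF i] by (auto simp: K_def)
      have gw: "g w = ev p u (monom 1 n) w" using n wv ev_monom[OF u p1 wv] by simp
      have "ev p u F (g w) = ev p u (monom 1 n) (ev p u F w)" using gw ev_commute[OF u p0 wv] by simp
      also have "\<dots> = vzero" using w lin_zero[OF ev_linear[OF u p0] p0] by (simp add: K_def)
      finally show "g w \<in> K i" using inv[OF i] g w by (auto simp: K_def invariant_def)
    qed
    moreover have "K i \<subseteq> Ws i" by (auto simp: K_def)
    ultimately show ?thesis using irr[OF i] unfolding irr_submodule_def by blast
  qed
  show ?thesis
  proof (cases "\<exists>i\<in>I. K i = Ws i")
    case True
    then obtain i where i: "i \<in> I" and Ki: "K i = Ws i" by blast
    have allz: "ev p u F y = vzero" if j: "j \<in> I" and y: "y \<in> Ws j" for j y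
    proof -
      obtain \<phi> where b: "bij_betw \<phi> (Ws i) (Ws j)" and l: "linear_on p (Ws i) (Ws j) \<phi>"
        and c: "\<forall>g\<in>U. \<forall>w\<in>Ws i. \<phi> (g w) = g (\<phi> w)"
        using iso[OF i j] unfolding iso_submodules_def by blast
      obtain x where x: "x \<in> Ws i" and yx: "y = \<phi> x" using b y by (metis bij_betw_iff_bijections)
      have "\<phi> (ev p u F x) = ev p u F (\<phi> x)"
        using ev_intertwine[OF u u p0 sub[OF i] sub[OF j] uWs[OF i] l _ x] c uU by blast
      moreover have "ev p u F x = vzero" using Ki x by (auto simp: K_def)
      moreover have "\<phi> vzero = vzero" using linear_zero[OF l] sub[OF i] p0 by (simp add: subspace_of_def)
      ultimately show ?thesis using yx by simp
    qed
    show ?thesis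
    proof
      fix v assume v: "v \<in> vecs p d"
      obtain ws where ws: "ws \<in> Pi\<^sub>E I Ws" and vw: "v = vsum p I ws"
        using bij v by (metis bij_betw_iff_bijections)
      have wsv: "\<And>j. j \<in> I \<Longrightarrow> ws j \<in> vecs p d" using ws Wsv by (auto simp: PiE_def Pi_def)
      have "ev p u F v = vsum p I (\<lambda>j. ev p u F (ws j))" using lin_vsum[OF evl p0 finI wsv] vw by simp
      also have "\<dots> = vsum p I (\<lambda>j. vzero)" using allz ws by (intro vsum_cong) (auto simp: PiE_def Pi_def)
      finally show "ev p u F v = vzero" by (simp add: vsum_zero)
    qed
  next
    case False
    hence Kz: "\<And>i. i \<in> I \<Longrightarrow> K i = {vzero}" using Kc by blast
    obtain ws where ws: "ws \<in> Pi\<^sub>E I Ws" and vw: "w0 = vsum p I ws"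
      using bij w0 by (metis bij_betw_iff_bijections)
    have wsv: "\<And>j. j \<in> I \<Longrightarrow> ws j \<in> vecs p d" using ws Wsv by (auto simp: PiE_def Pi_def)
    have "vzero = vsum p I (\<lambda>j. ev p u F (ws j))" using lin_vsum[OF evl p0 finI wsv] vw F by simp
    also have "\<dots> = vsum p I (restrict (\<lambda>j. ev p u F (ws j)) I)" by (intro vsum_cong) auto
    finally have e1: "vsum p I (restrict (\<lambda>j. ev p u F (ws j)) I) = vsum p I (restrict (\<lambda>j. vzero) I)"
      by (metis (no_types, lifting) restrict_apply vsum_cong vsum_zero)
    have m1: "restrict (\<lambda>j. ev p u F (ws j)) I \<in> Pi\<^sub>E I Ws" using ws evWs by (auto simp: PiE_def Pi_def)
    have m2: "restrict (\<lambda>j. vzero) I \<in> Pi\<^sub>E I Ws" using sub by (auto simp: subspace_of_def)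
    have "restrict (\<lambda>j. ev p u F (ws j)) I = restrict (\<lambda>j. vzero) I"
      using bij m1 m2 e1 unfolding bij_betw_def inj_on_def by blast
    hence "\<And>j. j \<in> I \<Longrightarrow> ws j \<in> K j" using ws by (auto simp: K_def fun_eq_iff PiE_def Pi_def split: if_splits)
    hence "\<And>j. j \<in> I \<Longrightarrow> ws j = vzero" using Kz by blast
    hence "w0 = vsum p I (\<lambda>j. vzero)" using vw by (metis vsum_cong)
    thus ?thesis using w0z vsum_zero by metis
  qed
qed


lemma GLgrp_simps:
  "carrier (GLgrp p d) = GL p d"
  "x \<otimes>\<^bsub>GLgrp p d\<^esub> y = compose (vecs p d) x y"
  "\<one>\<^bsub>GLgrp p d\<^esub> = restrict id (vecs p d)"
  by (simp_all add: GLgrp_def)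

lemma pow_apply:
  assumes u: "u \<in> GL p d" and p: "0 < p"
  shows "\<forall>v\<in>vecs p d. (u [^]\<^bsub>GLgrp p d\<^esub> n) v = (u ^^ n) v"
proof (induction n)
  case 0 thus ?case by (simp add: GLgrp_simps)
next
  case (Suc n)
  show ?case
  proof
    fix v assume v: "v \<in> vecs p d"
    have "(u [^]\<^bsub>GLgrp p d\<^esub> Suc n) v = (u [^]\<^bsub>GLgrp p d\<^esub> n) (u v)"
      using v by (simp add: compose_eq GLgrp_simps)
    also have "\<dots> = (u ^^ n) (u v)" using Suc GL_in[OF u v] by blast
    finally show "(u [^]\<^bsub>GLgrp p d\<^esub> Suc n) v = (u ^^ Suc n) v" by (metis comp_apply funpow_Suc_right)
  qed
qed

lemma inv_apply:
  assumes p: "0 < p" and g: "g \<in> GL p d" and v: "v \<in> vecs p d"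
  shows "(inv\<^bsub>GLgrp p d\<^esub> g) (g v) = v" "g ((inv\<^bsub>GLgrp p d\<^esub> g) v) = v"
    "inv\<^bsub>GLgrp p d\<^esub> g \<in> GL p d"
proof -
  interpret G: group "GLgrp p d" using GLgrp_group[OF p] .
  have "inv\<^bsub>GLgrp p d\<^esub> g \<otimes>\<^bsub>GLgrp p d\<^esub> g = \<one>\<^bsub>GLgrp p d\<^esub>" using G.l_inv[of g] g by (simp add: GLgrp_simps)
  hence "compose (vecs p d) (inv\<^bsub>GLgrp p d\<^esub> g) g v = restrict id (vecs p d) v" by (simp add: GLgrp_simps)
  thus "(inv\<^bsub>GLgrp p d\<^esub> g) (g v) = v" using v by (simp add: compose_eq)
  have "g \<otimes>\<^bsub>GLgrp p d\<^esub> inv\<^bsub>GLgrp p d\<^esub> g = \<one>\<^bsub>GLgrp p d\<^esub>" using G.r_inv[of g] g by (simp add: GLgrp_simps)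
  hence "compose (vecs p d) g (inv\<^bsub>GLgrp p d\<^esub> g) v = restrict id (vecs p d) v" by (simp add: GLgrp_simps)
  thus "g ((inv\<^bsub>GLgrp p d\<^esub> g) v) = v" using v by (simp add: compose_eq)
  show "inv\<^bsub>GLgrp p d\<^esub> g \<in> GL p d" using G.inv_closed[of g] g by (simp add: GLgrp_simps)
qed

lemma conj_bound:
  assumes p: "Factorial_Ring.prime p"
    and G0: "subgroup G0 (GLgrp p d)" and UG0: "U \<subseteq> G0" and Usub: "subgroup U (GLgrp p d)"
    and uU: "u \<in> U" and Upow: "\<And>g. g \<in> U \<Longrightarrow> \<exists>n::nat. g = u [^]\<^bsub>GLgrp p d\<^esub> n"
    and Unorm: "\<And>g x. g \<in> G0 \<Longrightarrow> x \<in> U \<Longrightarrow> g \<otimes>\<^bsub>GLgrp p d\<^esub> x \<otimes>\<^bsub>GLgrp p d\<^esub> inv\<^bsub>GLgrp p d\<^esub> g \<in> U"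
    and W: "subspace_of p d W" and UW: "invariant U W" and cW: "card W = p ^ k"
    and w0: "w0 \<in> W" and w0z: "w0 \<noteq> vzero"
    and hom: "homogeneous p d U"
    and fpf: "\<forall>x\<in>U. x \<noteq> \<one>\<^bsub>GLgrp p d\<^esub> \<longrightarrow> (\<forall>w\<in>W. w \<noteq> vzero \<longrightarrow> x w \<noteq> w)"
  shows "card {g \<otimes>\<^bsub>GLgrp p d\<^esub> u \<otimes>\<^bsub>GLgrp p d\<^esub> inv\<^bsub>GLgrp p d\<^esub> g | g. g \<in> G0} \<le> k"
proof -
  have p1: "1 < p" using p prime_gt_1_nat by blast
  hence p0: "0 < p" by simp
  interpret G: group "GLgrp p d" using GLgrp_group[OF p0] .
  have G0GL: "G0 \<subseteq> GL p d" using subgroup.subset[OF G0] by (simp add: GLgrp_simps)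
  have UGL: "U \<subseteq> GL p d" using UG0 G0GL by blast
  have uGL: "u \<in> GL p d" using uU UGL by blast
  have ul: "lin p d u" using GL_linear[OF uGL] .
  have Wv: "W \<subseteq> vecs p d" using W by (simp add: subspace_of_def)
  have uW: "\<And>w. w \<in> W \<Longrightarrow> u w \<in> W" using UW uU by (simp add: invariant_def)
  obtain F where degF: "degree F \<le> k" and lcF: "\<not> int p dvd lead_coeff F" and F0: "ev p u F w0 = vzero"
    using annihilator_vec[OF p ul W uW cW w0] by blast
  have Upow': "\<exists>n. \<forall>v\<in>vecs p d. g v = (u ^^ n) v" if gU: "g \<in> U" for g
  proof -
    obtain n :: nat where "g = u [^]\<^bsub>GLgrp p d\<^esub> n" using Upow[OF gU] by blast
    hence "\<forall>v\<in>vecs p d. g v = (u ^^ n) v" using pow_apply[OF uGL p0, of n] by simp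
    thus ?thesis by blast
  qed
  have Fall: "\<forall>v\<in>vecs p d. ev p u F v = vzero"
    using ann_all[OF p ul hom Upow' uU F0 _ w0z] w0 Wv by blast
  define Conj where "Conj = {g \<otimes>\<^bsub>GLgrp p d\<^esub> u \<otimes>\<^bsub>GLgrp p d\<^esub> inv\<^bsub>GLgrp p d\<^esub> g | g. g \<in> G0}"
  have ConjU: "Conj \<subseteq> U" unfolding Conj_def using Unorm uU by blast
  have finConj: "finite Conj" using finite_subset[OF subset_trans[OF ConjU UGL] GL_finite[OF p0]] .
  have ConjF: "\<forall>w\<in>vecs p d. ev p y F w = vzero" if y: "y \<in> Conj" for y
  proof
    fix w assume w: "w \<in> vecs p d"
    obtain g where g: "g \<in> G0" and yg: "y = g \<otimes>\<^bsub>GLgrp p d\<^esub> u \<otimes>\<^bsub>GLgrp p d\<^esub> inv\<^bsub>GLgrp p d\<^esub> g"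
      using y unfolding Conj_def by blast
    have gGL: "g \<in> GL p d" using subsetD[OF G0GL g] .
    have yGL: "y \<in> GL p d" using subsetD[OF UGL subsetD[OF ConjU y]] .
    have yl: "lin p d y" using GL_linear[OF yGL] .
    have comm: "g (u v) = y (g v)" if v: "v \<in> vecs p d" for v
      using v yg gGL uGL inv_apply[OF p0 gGL] GL_in[OF gGL] GL_in[OF uGL]
      by (simp add: compose_eq GLgrp_simps)
    have "w \<in> g ` vecs p d" using GL_bij[OF gGL] w by (simp add: bij_betw_def)
    then obtain v where v: "v \<in> vecs p d" and wv: "w = g v" by blast
    have "ev p u F v \<in> vecs p d \<and> g (ev p u F v) = ev p y F (g v)"
      by (rule ev_intertwine[of p d u y "vecs p d" "vecs p d" g v F])
         (use ul yl p0 subspace_vecs[OF p0] lin_in[OF ul] GL_linear[OF gGL] comm v in auto)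
    hence "g (ev p u F v) = ev p y F (g v)" by (rule conjunct2)
    thus "ev p y F w = vzero" using Fall v wv lin_zero[OF GL_linear[OF gGL] p0] by simp
  qed
  define ex where "ex y = (SOME n::nat. y = u [^]\<^bsub>GLgrp p d\<^esub> n)" for y
  have exy: "u [^]\<^bsub>GLgrp p d\<^esub> ex y = y" if "y \<in> U" for y
  proof -
    have "y = u [^]\<^bsub>GLgrp p d\<^esub> ex y"
      unfolding ex_def using Upow[OF that] by (rule someI_ex)
    thus ?thesis by (rule sym)
  qed
  define S where "S = (\<lambda>y. monom (1::int) (ex y)) ` Conj"
  have injS: "inj_on (\<lambda>y. monom (1::int) (ex y)) Conj"
  proof (rule inj_onI)
    fix y y' assume "y \<in> Conj" "y' \<in> Conj" "monom (1::int) (ex y) = monom 1 (ex y')"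
    hence "ex y = ex y'" by (simp add: monom_eq_iff')
    hence "u [^]\<^bsub>GLgrp p d\<^esub> ex y = u [^]\<^bsub>GLgrp p d\<^esub> ex y'" by simp
    thus "y = y'" using exy[OF subsetD[OF ConjU \<open>y \<in> Conj\<close>]] exy[OF subsetD[OF ConjU \<open>y' \<in> Conj\<close>]]
      by metis
  qed
  define f where "f = map_poly (\<lambda>c. [:c:]) F"
  define I where "I = {P. \<forall>w\<in>W. ev p u P w = vzero}"
  have "card S \<le> degree f"
  proof (rule root_bound[where I = I])
    show "finite S" using finConj by (simp add: S_def)
  next
    fix x y assume "x \<in> I" "y \<in> I"
    thus "x - y \<in> I" using ev_sub_zero[OF ul p0] Wv unfolding I_def by auto
  next
    fix a assume "a \<in> S"
    then obtain y where y: "y \<in> Conj" and a: "a = monom 1 (ex y)" by (auto simp: S_def)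
    have yGL: "y \<in> GL p d" using y ConjU UGL by blast
    show "poly f a \<in> I" unfolding I_def mem_Collect_eq
    proof
      fix w assume w: "w \<in> W"
      have wv: "w \<in> vecs p d" using w Wv by blast
      have "ev p u (poly f a) w = ev p (ev p u a) F w"
        unfolding f_def using ev_compose[OF ul p0 wv] .
      also have "\<dots> = ev p y F w"
      proof (rule ev_cong[OF ev_linear[OF ul p0] GL_linear[OF yGL] p0 _ wv])
        fix x assume x: "x \<in> vecs p d"
        have "ev p u a x = (u ^^ ex y) x" using a ev_monom[OF ul p1 x] by simp
        also have "\<dots> = (u [^]\<^bsub>GLgrp p d\<^esub> ex y) x" using pow_apply[OF uGL p0] x by simp
        also have "\<dots> = y x" using exy[of y] y ConjU by auto
        finally show "ev p u a x = y x" .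
      qed
      also have "\<dots> = vzero" using ConjF[OF y] wv by blast
      finally show "ev p u (poly f a) w = vzero" .
    qed
  next
    show "lead_coeff f \<notin> I"
    proof
      assume lI: "lead_coeff f \<in> I"
      have lc0: "lead_coeff F \<noteq> 0" using lcF by auto
      have "lead_coeff f = [:lead_coeff F:]" unfolding f_def
        by (rule lead_coeff_map_poly_nz) (use lc0 in auto)
      hence "ev p u [:lead_coeff F:] w0 = vzero" using lI w0 by (simp add: I_def)
      hence e: "vsmul p (sc p (lead_coeff F)) w0 = vzero" using ev_const[OF ul p0] w0 Wv by auto
      obtain i where i: "w0 i \<noteq> 0" using w0z by (auto simp: vzero_def)
      have "vsmul p (sc p (lead_coeff F)) w0 i = vzero i" using e by simp
      hence "(sc p (lead_coeff F) * w0 i) mod p = 0" by (simp add: vsmul_def vzero_def)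
      hence "p dvd sc p (lead_coeff F) * w0 i" by auto
      hence "p dvd sc p (lead_coeff F) \<or> p dvd w0 i" using p by (simp add: prime_dvd_mult_iff)
      moreover have "w0 i < p" using vecs_lt[of w0 p d i] w0 Wv p0 by blast
      moreover have "sc p (lead_coeff F) < p" using sc_lt[OF p0] .
      ultimately have "sc p (lead_coeff F) = 0" using i by (meson dvd_imp_le linorder_not_le not_gr0)
      moreover have "0 \<le> lead_coeff F mod int p" using p0 by (simp add: pos_mod_sign)
      ultimately have "lead_coeff F mod int p = 0" unfolding sc_def by simp
      thus False using lcF by (simp add: dvd_eq_mod_eq_0)
    qed
  next
    fix a b h assume a: "a \<in> S" and b: "b \<in> S" and ab: "a \<noteq> b" and h: "(b - a) * h \<in> I"
    obtain y where y: "y \<in> Conj" and ay: "a = monom 1 (ex y)" using a by (auto simp: S_def)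
    obtain y' where y': "y' \<in> Conj" and by': "b = monom 1 (ex y')" using b by (auto simp: S_def)
    have yy: "y \<noteq> y'" using ab ay by' by auto
    have yU: "y \<in> U" and yU': "y' \<in> U" using y y' ConjU by auto
    have yGL: "y \<in> GL p d" and yGL': "y' \<in> GL p d" using yU yU' UGL by auto
    have evy: "ev p u (monom 1 (ex z)) x = z x" if "z \<in> U" "x \<in> vecs p d" for z x
    proof -
      have "ev p u (monom 1 (ex z)) x = (u ^^ ex z) x" using ev_monom[OF ul p1 that(2)] by simp
      also have "\<dots> = (u [^]\<^bsub>GLgrp p d\<^esub> ex z) x" using pow_apply[OF uGL p0] that(2) by simp
      also have "\<dots> = z x" using exy[OF that(1)] by simp
      finally show ?thesis .
    qed
    show "h \<in> I" unfolding I_def mem_Collect_eq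
    proof
      fix w assume w: "w \<in> W"
      have wv: "w \<in> vecs p d" using w Wv by blast
      define z where "z = ev p u h w"
      have zW: "z \<in> W" unfolding z_def using ev_invariant[OF ul p0 W uW w] .
      have zv: "z \<in> vecs p d" using zW Wv by blast
      have "ev p u (b - a) z = vzero" using h w ev_mult[OF ul p0 wv, of "b - a" h] by (simp add: I_def z_def)
      hence "ev p u b z = ev p u a z" using ev_sub_zero_iff[OF ul p0 zv] by blast
      hence yz: "y' z = y z" using evy[OF yU zv] evy[OF yU' zv] ay by' by simp
      show "ev p u h w = vzero"
      proof (rule ccontr)
        assume "ev p u h w \<noteq> vzero"
        hence zz: "z \<noteq> vzero" by (simp add: z_def)
        define x where "x = inv\<^bsub>GLgrp p d\<^esub> y \<otimes>\<^bsub>GLgrp p d\<^esub> y'"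
        have xU: "x \<in> U" unfolding x_def using Usub yU yU' by (simp add: subgroup.m_closed subgroup.m_inv_closed)
        have "x \<noteq> \<one>\<^bsub>GLgrp p d\<^esub>"
        proof
          assume "x = \<one>\<^bsub>GLgrp p d\<^esub>"
          hence "y \<otimes>\<^bsub>GLgrp p d\<^esub> (inv\<^bsub>GLgrp p d\<^esub> y \<otimes>\<^bsub>GLgrp p d\<^esub> y') = y \<otimes>\<^bsub>GLgrp p d\<^esub> \<one>\<^bsub>GLgrp p d\<^esub>"
            unfolding x_def by simp
          moreover have yC: "y \<in> carrier (GLgrp p d)" "y' \<in> carrier (GLgrp p d)" using yGL yGL' by (simp_all add: GLgrp_simps)
          ultimately have "y' = y" by (simp add: G.m_assoc[symmetric])
          thus False using yy by simp
        qed
        moreover have "x z = z" unfolding x_def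
          using zv yz inv_apply[OF p0 yGL zv] by (simp add: compose_eq GLgrp_simps)
        ultimately show False using fpf xU zW zz by blast
      qed
    qed
  qed
  moreover have "degree f = degree F" unfolding f_def by (rule degree_map_poly) simp
  moreover have "card S = card Conj" unfolding S_def using card_image[OF injS] .
  ultimately show ?thesis using degF by (simp add: Conj_def)
qed


lemma (in group) conj_eq_comm:
  assumes g: "g \<in> carrier G" and h: "h \<in> carrier G" and u: "u \<in> carrier G"
    and e: "g \<otimes> u \<otimes> inv g = h \<otimes> u \<otimes> inv h"
  shows "(inv h \<otimes> g) \<otimes> u = u \<otimes> (inv h \<otimes> g)"
proof -
  have "g \<otimes> u = g \<otimes> u \<otimes> inv g \<otimes> g" using g u by (simp add: m_assoc)
  also have "\<dots> = h \<otimes> u \<otimes> inv h \<otimes> g" using e by simp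
  finally have 1: "g \<otimes> u = h \<otimes> u \<otimes> inv h \<otimes> g" .
  have "(inv h \<otimes> g) \<otimes> u = inv h \<otimes> (g \<otimes> u)" using g h u by (simp add: m_assoc)
  also have "\<dots> = inv h \<otimes> (h \<otimes> u \<otimes> inv h \<otimes> g)" using 1 by simp
  also have "\<dots> = (inv h \<otimes> h) \<otimes> (u \<otimes> (inv h \<otimes> g))" using g h u by (simp only: m_assoc m_closed inv_closed)
  also have "\<dots> = \<one> \<otimes> (u \<otimes> (inv h \<otimes> g))" using h by (simp only: l_inv)
  also have "\<dots> = u \<otimes> (inv h \<otimes> g)" using g h u by (simp only: l_one m_closed inv_closed)
  finally show ?thesis .
qed

lemma (in group) comm_pow:
  assumes c: "c \<in> carrier G" and u: "u \<in> carrier G" and e: "c \<otimes> u = u \<otimes> c"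
  shows "c \<otimes> u [^] (n::nat) = u [^] n \<otimes> c"
proof (induction n)
  case 0 thus ?case using c by simp
next
  case (Suc n)
  have "c \<otimes> u [^] Suc n = (c \<otimes> u [^] n) \<otimes> u" using c u by (simp add: m_assoc)
  also have "\<dots> = u [^] n \<otimes> (c \<otimes> u)" using Suc c u by (simp add: m_assoc)
  also have "\<dots> = u [^] Suc n \<otimes> c" using e c u by (simp add: m_assoc)
  finally show ?case .
qed

lemma (in group) conj_count:
  assumes G0: "subgroup G0 G" and fin: "finite G0" and u: "u \<in> G0"
    and Upow: "\<And>x. x \<in> U \<Longrightarrow> \<exists>n::nat. x = u [^] n"
    and A: "A = {g \<in> G0. \<forall>x\<in>U. g \<otimes> x = x \<otimes> g}"
  shows "card G0 \<le> card {g \<otimes> u \<otimes> inv g | g. g \<in> G0} * card A"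
proof -
  have G0c: "G0 \<subseteq> carrier G" using G0 subgroup.subset by blast
  have uc: "u \<in> carrier G" using u G0c by blast
  define Conj where "Conj = {g \<otimes> u \<otimes> inv g | g. g \<in> G0}"
  define fib where "fib y = {g \<in> G0. g \<otimes> u \<otimes> inv g = y}" for y
  have finC: "finite Conj" unfolding Conj_def using fin by simp
  have "G0 = (\<Union>y\<in>Conj. fib y)" by (auto simp: Conj_def fib_def)
  hence "card G0 \<le> (\<Sum>y\<in>Conj. card (fib y))" using card_UN_le[OF finC] by simp
  also have "\<dots> \<le> of_nat (card Conj) * card A"
  proof (rule sum_bounded_above)
    fix y assume y: "y \<in> Conj"
    then obtain h where h: "h \<in> G0" and yh: "y = h \<otimes> u \<otimes> inv h" by (auto simp: Conj_def)
    have hc: "h \<in> carrier G" using h G0c by blast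
    have "inj_on (\<lambda>g. inv h \<otimes> g) (fib y)"
    proof (rule inj_onI)
      fix a b assume "a \<in> fib y" "b \<in> fib y" "inv h \<otimes> a = inv h \<otimes> b"
      moreover have "a \<in> carrier G" "b \<in> carrier G" using calculation(1,2) G0c by (auto simp: fib_def)
      ultimately show "a = b" using hc by (metis l_cancel inv_closed)
    qed
    moreover have "(\<lambda>g. inv h \<otimes> g) ` fib y \<subseteq> A"
    proof
      fix c assume "c \<in> (\<lambda>g. inv h \<otimes> g) ` fib y"
      then obtain g where g: "g \<in> G0" and gy: "g \<otimes> u \<otimes> inv g = y" and cg: "c = inv h \<otimes> g"
        by (auto simp: fib_def)
      have gc: "g \<in> carrier G" using g G0c by blast
      have cc: "c \<in> carrier G" using cg gc hc by simp
      have cu: "c \<otimes> u = u \<otimes> c" using conj_eq_comm[OF gc hc uc] gy yh cg by simp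
      have "c \<in> G0" using cg g h G0 by (simp add: subgroup.m_closed subgroup.m_inv_closed)
      moreover have "\<forall>x\<in>U. c \<otimes> x = x \<otimes> c"
      proof
        fix x assume "x \<in> U"
        then obtain n :: nat where "x = u [^] n" using Upow by blast
        thus "c \<otimes> x = x \<otimes> c" using comm_pow[OF cc uc cu] by simp
      qed
      ultimately show "c \<in> A" using A by simp
    qed
    moreover have "finite A" using A fin by simp
    ultimately show "card (fib y) \<le> card A" using card_inj_on_le by blast
  qed
  finally show ?thesis by (simp add: Conj_def)
qed

lemma (in group) lagrange_sub:
  assumes K: "subgroup K G" and H: "subgroup H G" and HK: "H \<subseteq> K" and fin: "finite K"
  shows "card (carrier ((G\<lparr>carrier := K\<rparr>) Mod H)) * card H = card K"
proof -
  interpret GK: group "G\<lparr>carrier := K\<rparr>" using subgroup_imp_group[OF K] .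
  have "subgroup H (G\<lparr>carrier := K\<rparr>)" using subgroup_incl[OF H K HK] .
  hence "card (rcosets\<^bsub>G\<lparr>carrier := K\<rparr>\<^esub> H) * card H = Coset.order (G\<lparr>carrier := K\<rparr>)"
    using GK.lagrange by blast
  thus ?thesis by (simp add: FactGroup_def Coset.order_def)
qed

lemma (in monoid) foldr_comm:
  assumes z: "z \<in> carrier G" and a: "a \<in> carrier G" and za: "z \<otimes> a = a \<otimes> z"
    and xs: "\<And>i. i \<in> set l \<Longrightarrow> x i \<in> carrier G \<and> z \<otimes> x i = x i \<otimes> z"
  shows "foldr (\<lambda>i acc. x i \<otimes> acc) l a \<in> carrier G \<and>
         z \<otimes> foldr (\<lambda>i acc. x i \<otimes> acc) l a = foldr (\<lambda>i acc. x i \<otimes> acc) l a \<otimes> z"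
  using xs
proof (induction l)
  case Nil thus ?case using a za by simp
next
  case (Cons i l)
  define r where "r = foldr (\<lambda>i acc. x i \<otimes> acc) l a"
  have r: "r \<in> carrier G" "z \<otimes> r = r \<otimes> z" using Cons by (auto simp: r_def)
  have xi: "x i \<in> carrier G" "z \<otimes> x i = x i \<otimes> z" using Cons.prems by auto
  have "z \<otimes> (x i \<otimes> r) = (z \<otimes> x i) \<otimes> r" using m_assoc[OF z xi(1) r(1)] by (rule sym)
  also have "\<dots> = (x i \<otimes> z) \<otimes> r" by (simp only: xi(2))
  also have "\<dots> = x i \<otimes> (z \<otimes> r)" using m_assoc[OF xi(1) z r(1)] .
  also have "\<dots> = x i \<otimes> (r \<otimes> z)" by (simp only: r(2))
  also have "\<dots> = (x i \<otimes> r) \<otimes> z" using m_assoc[OF xi(1) r(1) z] by (rule sym)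
  finally show ?case using xi r by (simp add: r_def)
qed

lemma (in monoid) gprod_comm:
  assumes z: "z \<in> carrier G" and xs: "\<And>i. i < s \<Longrightarrow> x i \<in> carrier G \<and> z \<otimes> x i = x i \<otimes> z"
  shows "gprod G s x \<in> carrier G \<and> z \<otimes> gprod G s x = gprod G s x \<otimes> z"
  unfolding gprod_def by (rule foldr_comm) (use z xs in auto)

lemma (in group) centre_card_bound:
  assumes E_prod: "internal_direct_product G E s Es"
    and Es_sub: "\<And>i. i < s \<Longrightarrow> Es i \<subseteq> carrier G"
    and cent: "\<And>i. i < s \<Longrightarrow> card (centre G (Es i)) = q i"
    and finE: "\<And>i. i < s \<Longrightarrow> finite (Es i)"
  shows "(\<Prod>i<s. q i) \<le> card (centre G E)"
proof -
  have comm: "\<And>i j x y. i < s \<Longrightarrow> j < s \<Longrightarrow> i \<noteq> j \<Longrightarrow> x \<in> Es i \<Longrightarrow> y \<in> Es j \<Longrightarrow> x \<otimes> y = y \<otimes> x"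
    using E_prod unfolding internal_direct_product_def by blast
  have bij: "bij_betw (gprod G s) (Pi\<^sub>E {..<s} Es) E"
    using E_prod unfolding internal_direct_product_def by blast
  define C where "C = Pi\<^sub>E {..<s} (\<lambda>i. centre G (Es i))"
  have CE: "C \<subseteq> Pi\<^sub>E {..<s} Es" by (auto simp: C_def centre_def PiE_def Pi_def)
  have inj: "inj_on (gprod G s) C" using bij CE unfolding bij_betw_def by (meson inj_on_subset)
  have img: "gprod G s ` C \<subseteq> centre G E"
  proof
    fix z assume "z \<in> gprod G s ` C"
    then obtain x where x: "x \<in> C" and zx: "z = gprod G s x" by blast
    have xE: "x \<in> Pi\<^sub>E {..<s} Es" using x CE by blast
    have zE: "z \<in> E" using bij xE zx by (auto simp: bij_betw_def)
    have xc: "\<And>i. i < s \<Longrightarrow> x i \<in> carrier G" using xE Es_sub by (auto simp: PiE_def Pi_def)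
    have "z \<otimes> h = h \<otimes> z" if hE: "h \<in> E" for h
    proof -
      obtain y where yE: "y \<in> Pi\<^sub>E {..<s} Es" and hy: "h = gprod G s y"
        using bij hE by (metis bij_betw_iff_bijections)
      have yc: "\<And>i. i < s \<Longrightarrow> y i \<in> carrier G" using yE Es_sub by (auto simp: PiE_def Pi_def)
      have xy: "x i \<otimes> y j = y j \<otimes> x i" if "i < s" "j < s" for i j
      proof (cases "i = j")
        case True
        have "x i \<in> centre G (Es i)" using x that by (auto simp: C_def)
        moreover have "y i \<in> Es i" using yE that by (auto simp: PiE_def Pi_def)
        ultimately show ?thesis using True by (auto simp: centre_def)
      next
        case False
        have "x i \<in> Es i" using xE that by (auto simp: PiE_def Pi_def)
        moreover have "y j \<in> Es j" using yE that by (auto simp: PiE_def Pi_def)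
        ultimately show ?thesis using comm[OF that False] by blast
      qed
      have hc: "\<And>i. i < s \<Longrightarrow> gprod G s y \<otimes> x i = x i \<otimes> gprod G s y"
        using gprod_comm[OF xc] xy yc by (metis (no_types, lifting))
      have "gprod G s y \<in> carrier G" using gprod_comm[OF one_closed, of s y] yc by simp
      hence "gprod G s y \<otimes> gprod G s x = gprod G s x \<otimes> gprod G s y"
        using gprod_comm[of "gprod G s y" s x] hc xc by blast
      thus ?thesis using hy zx by simp
    qed
    thus "z \<in> centre G E" using zE by (auto simp: centre_def)
  qed
  have "card C = (\<Prod>i<s. q i)" unfolding C_def by (simp add: card_PiE cent)
  moreover have "finite (centre G E)"
  proof -
    have "finite (Pi\<^sub>E {..<s} Es)" using finE by (intro finite_PiE) auto
    hence "finite E" using bij bij_betw_finite by blast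
    thus ?thesis by (rule finite_subset[rotated]) (auto simp: centre_def)
  qed
  ultimately show ?thesis using card_inj_on_le[OF inj img] by simp
qed

lemma orbit_bound:
  assumes p0: "0 < p" and G0: "G0 \<subseteq> GL p d" and one: "restrict id (vecs p d) \<in> G0"
  shows "card (vecs p d) - 1 \<le> (rank_affine p d G0 - 1) * card G0 \<and> 1 \<le> rank_affine p d G0"
proof -
  define V where "V = vecs p d"
  define Orb where "Orb v = (\<lambda>g. g v) ` G0" for v
  define Orbs where "Orbs = Orb ` V"
  have rk: "rank_affine p d G0 = card Orbs" by (simp add: rank_affine_def Orbs_def Orb_def V_def)
  have finV: "finite V" using vecs_finite[OF p0] by (simp add: V_def)
  have finG: "finite G0" using GL_finite[OF p0] G0 finite_subset by blast
  have finO: "finite Orbs" using finV by (simp add: Orbs_def)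
  have z: "vzero \<in> V" using vzero_vecs[OF p0] by (simp add: V_def)
  have Oz: "Orb vzero = {vzero}"
  proof
    show "Orb vzero \<subseteq> {vzero}" using G0 lin_zero[OF GL_linear p0] by (auto simp: Orb_def)
    have "restrict id (vecs p d) vzero = vzero" using vzero_vecs[OF p0] by simp
    thus "{vzero} \<subseteq> Orb vzero" using one unfolding Orb_def by (metis empty_subsetI image_eqI insert_subset)
  qed
  have zO: "{vzero} \<in> Orbs" using Oz z by (force simp: Orbs_def)
  have vO: "v \<in> Orb v" if "v \<in> V" for v
    unfolding Orb_def using one that by (intro image_eqI[of v _ "restrict id (vecs p d)"]) (auto simp: V_def)
  have "V - {vzero} \<subseteq> \<Union>(Orbs - {{vzero}})"
  proof
    fix v assume v: "v \<in> V - {vzero}"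
    have "Orb v \<in> Orbs - {{vzero}}" using v vO[of v] by (auto simp: Orbs_def)
    thus "v \<in> \<Union>(Orbs - {{vzero}})" using vO[of v] v by blast
  qed
  hence "card (V - {vzero}) \<le> card (\<Union>(Orbs - {{vzero}}))"
    using finO finV by (intro card_mono) (auto simp: Orbs_def Orb_def intro!: finite_imageI finG)
  also have "\<dots> \<le> sum card (Orbs - {{vzero}})" by (rule card_Union_le_sum_card)
  also have "\<dots> \<le> of_nat (card (Orbs - {{vzero}})) * card G0"
  proof (rule sum_bounded_above)
    fix oo assume "oo \<in> Orbs - {{vzero}}"
    then obtain v where "oo = Orb v" by (auto simp: Orbs_def)
    thus "card oo \<le> card G0" using finG by (simp add: Orb_def card_image_le)
  qed
  finally have "card V - 1 \<le> (card Orbs - 1) * card G0" using zO finO z finV by simp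
  moreover have "1 \<le> card Orbs" using zO finO by (metis One_nat_def Suc_leI card_gt_0_iff empty_iff)
  ultimately show ?thesis using rk by (simp add: V_def)
qed


theorem proposition2p3:
  fixes p d :: nat
    and G0 A F U E :: "lmap set" and W :: "vec set"
    and s :: nat and Es :: "nat \<Rightarrow> lmap set" and q m :: "nat \<Rightarrow> nat"
    and e k b :: nat
  assumes p_prime: "Factorial_Ring.prime p"
    and G0_sub: "subgroup G0 (GLgrp p d)"
    and G0_solv: "solvable ((GLgrp p d)\<lparr>carrier := G0\<rparr>)"
    and G0_irr: "irr_submodule p d G0 (vecs p d)"
    and G0_qp: "quasi_primitive p d G0"
    \<comment> \<open>chain Z(E) <= U <= F <= A <= G0, all normal in G0; E characteristic in F\<close>
    and ZU: "centre (GLgrp p d) E \<subseteq> U" and UF: "U \<subseteq> F" and FA: "F \<subseteq> A" and AG0: "A \<subseteq> G0"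
    and Z_nml: "centre (GLgrp p d) E \<lhd> (GLgrp p d)\<lparr>carrier := G0\<rparr>"
    and U_nml: "U \<lhd> (GLgrp p d)\<lparr>carrier := G0\<rparr>"
    and F_nml: "F \<lhd> (GLgrp p d)\<lparr>carrier := G0\<rparr>"
    and A_nml: "A \<lhd> (GLgrp p d)\<lparr>carrier := G0\<rparr>"
    and E_sub: "subgroup E (GLgrp p d)" and EF: "E \<subseteq> F"
    and E_char: "characteristic (GLgrp p d) E F"
    \<comment> \<open>(i) F = EU central product, E \<inter> U = Z(E)\<close>
    and F_EU: "F = E <#>\<^bsub>GLgrp p d\<^esub> U"
    and E_U_comm: "\<forall>x\<in>E. \<forall>y\<in>U. x \<otimes>\<^bsub>GLgrp p d\<^esub> y = y \<otimes>\<^bsub>GLgrp p d\<^esub> x"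
    and E_int_U: "E \<inter> U = centre (GLgrp p d) E"
    \<comment> \<open>(ii)\<close>
    and FU_iso: "((GLgrp p d)\<lparr>carrier := F\<rparr> Mod U) \<cong>
                 ((GLgrp p d)\<lparr>carrier := E\<rparr> Mod (centre (GLgrp p d) E))"
    and E_cr: "compl_reducible_section (GLgrp p d) G0 E (centre (GLgrp p d) E)"
    \<comment> \<open>(iii)\<close>
    and E_prod: "internal_direct_product (GLgrp p d) E s Es"
    and Es_extra: "\<forall>i<s. extraspecial (GLgrp p d) (Es i) (q i) (m i) \<and> m i \<ge> 1"
    and q_distinct: "inj_on q {..<s}"
    and e_def: "e = (\<Prod>i<s. q i ^ m i)"
    and e_dvd: "e dvd d" and p_e_cop: "coprime p e"
    \<comment> \<open>(iv)\<close>
    and A_cent: "A = centralizer_in (GLgrp p d) G0 U"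
    and AF_faithful: "\<forall>a\<in>A. (\<forall>x\<in>E. a \<otimes>\<^bsub>GLgrp p d\<^esub> x \<otimes>\<^bsub>GLgrp p d\<^esub> inv\<^bsub>GLgrp p d\<^esub> a
                                  \<otimes>\<^bsub>GLgrp p d\<^esub> inv\<^bsub>GLgrp p d\<^esub> x \<in> centre (GLgrp p d) E)
                           \<longrightarrow> a \<in> F"
    \<comment> \<open>(v)\<close>
    and U_cyclic: "\<exists>u\<in>U. U = generate (GLgrp p d) {u}"
    and W_irr: "irr_submodule p d U W"
    and U_fpf: "\<forall>u\<in>U. u \<noteq> \<one>\<^bsub>GLgrp p d\<^esub> \<longrightarrow> (\<forall>w\<in>W. w \<noteq> vzero \<longrightarrow> u w \<noteq> w)"
    \<comment> \<open>(vi), (vii)\<close>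
    and k_pos: "k \<ge> 1" and U_dvd: "card U dvd p ^ k - 1" and W_card: "card W = p ^ k"
    and b_pos: "b \<ge> 1" and V_card: "card (vecs p d) = card W ^ (e * b)" and d_eq: "d = b * k * e"
  shows "\<lceil>(real (card W) ^ e - 1) /
           (log 2 (real (card W)) * real (card A div card F) * real e ^ 2 * (real (card W) - 1))\<rceil> + 1
         \<le> int (rank_affine p d G0)"
proof -
  have p1: "1 < p" using p_prime prime_gt_1_nat by blast
  hence p0: "0 < p" by simp
  interpret G: group "GLgrp p d" using GLgrp_group[OF p0] .
  have carG: "carrier (GLgrp p d) = GL p d" by (simp add: GLgrp_def)
  have G0GL: "G0 \<subseteq> GL p d" using subgroup.subset[OF G0_sub] carG by simp
  have finG0: "finite G0" using finite_subset[OF G0GL GL_finite[OF p0]] .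
  have sub_of: "subgroup HH (GLgrp p d)" if "HH \<lhd> (GLgrp p d)\<lparr>carrier := G0\<rparr>" for HH
    using G.incl_subgroup[OF G0_sub normal_imp_subgroup[OF that]] .
  have subU: "subgroup U (GLgrp p d)" using sub_of[OF U_nml] .
  have subF: "subgroup F (GLgrp p d)" using sub_of[OF F_nml] .
  have subA: "subgroup A (GLgrp p d)" using sub_of[OF A_nml] .
  have subZ: "subgroup (centre (GLgrp p d) E) (GLgrp p d)" using sub_of[OF Z_nml] .
  have UG0: "U \<subseteq> G0" using UF FA AG0 by blast
  have UGL: "U \<subseteq> GL p d" using UG0 G0GL by blast
  obtain u where uU: "u \<in> U" and Ugen: "U = generate (GLgrp p d) {u}" using U_cyclic by blast
  have uc: "u \<in> carrier (GLgrp p d)" using uU UGL carG by blast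
  have Upow: "\<exists>n::nat. x = u [^]\<^bsub>GLgrp p d\<^esub> n" if "x \<in> U" for x
  proof -
    have "finite (carrier (GLgrp p d))" using GL_finite[OF p0] carG by simp
    hence "U = {u [^]\<^bsub>GLgrp p d\<^esub> k | k. k \<in> (UNIV :: nat set)}"
      using G.generate_pow_on_finite_carrier[OF _ uc] Ugen by simp
    thus ?thesis using that by blast
  qed
  have Unorm: "g \<otimes>\<^bsub>GLgrp p d\<^esub> x \<otimes>\<^bsub>GLgrp p d\<^esub> inv\<^bsub>GLgrp p d\<^esub> g \<in> U" if g: "g \<in> G0" and x: "x \<in> U" for g x
  proof -
    interpret N: normal U "(GLgrp p d)\<lparr>carrier := G0\<rparr>" using U_nml .
    have "g \<otimes>\<^bsub>(GLgrp p d)\<lparr>carrier := G0\<rparr>\<^esub> x \<otimes>\<^bsub>(GLgrp p d)\<lparr>carrier := G0\<rparr>\<^esub> inv\<^bsub>(GLgrp p d)\<lparr>carrier := G0\<rparr>\<^esub> g \<in> U"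
      using N.inv_op_closed2[of g x] g x by simp
    moreover have "inv\<^bsub>(GLgrp p d)\<lparr>carrier := G0\<rparr>\<^esub> g = inv\<^bsub>GLgrp p d\<^esub> g"
      using G.m_inv_consistent[OF G0_sub g] .
    ultimately show ?thesis by simp
  qed
  have Wsub: "subspace_of p d W" and UW: "invariant U W" and Wnz: "W \<noteq> {vzero}"
    using W_irr by (auto simp: irr_submodule_def)
  obtain w0 where w0: "w0 \<in> W" and w0z: "w0 \<noteq> vzero"
    using Wsub Wnz by (auto simp: subspace_of_def)
  have hom: "homogeneous p d U" using G0_qp U_nml by (simp add: quasi_primitive_def)
  have conjk: "card {g \<otimes>\<^bsub>GLgrp p d\<^esub> u \<otimes>\<^bsub>GLgrp p d\<^esub> inv\<^bsub>GLgrp p d\<^esub> g | g. g \<in> G0} \<le> k"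
    by (rule conj_bound[OF p_prime G0_sub UG0 subU uU Upow Unorm Wsub UW W_card w0 w0z hom U_fpf])
  have Aeq: "A = {g \<in> G0. \<forall>x\<in>U. g \<otimes>\<^bsub>GLgrp p d\<^esub> x = x \<otimes>\<^bsub>GLgrp p d\<^esub> g}"
    using A_cent by (simp add: centralizer_in_def)
  have cnt: "card G0 \<le> card {g \<otimes>\<^bsub>GLgrp p d\<^esub> u \<otimes>\<^bsub>GLgrp p d\<^esub> inv\<^bsub>GLgrp p d\<^esub> g | g. g \<in> G0} * card A"
    using G.conj_count[OF G0_sub finG0 _ Upow Aeq] uU UG0 by blast
  have finA: "finite A" using AG0 finG0 finite_subset by blast
  have finF: "finite F" using FA finA finite_subset by blast
  have finE: "finite E" using EF finF finite_subset by blast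
  define Z where "Z = centre (GLgrp p d) E"
  have ZE: "Z \<subseteq> E" by (auto simp: Z_def centre_def)
  have LA: "card (carrier ((GLgrp p d)\<lparr>carrier := A\<rparr> Mod F)) * card F = card A"
    using G.lagrange_sub[OF subA subF FA finA] .
  have LF: "card (carrier ((GLgrp p d)\<lparr>carrier := F\<rparr> Mod U)) * card U = card F"
    using G.lagrange_sub[OF subF subU UF finF] .
  have LE: "card (carrier ((GLgrp p d)\<lparr>carrier := E\<rparr> Mod Z)) * card Z = card E"
    using G.lagrange_sub[OF E_sub subZ[folded Z_def] ZE finE] .
  have iso: "card (carrier ((GLgrp p d)\<lparr>carrier := F\<rparr> Mod U)) = card (carrier ((GLgrp p d)\<lparr>carrier := E\<rparr> Mod Z))"
    using iso_same_card[OF FU_iso] by (simp add: Z_def)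
  define t where "t = card (carrier ((GLgrp p d)\<lparr>carrier := E\<rparr> Mod Z))"
  have cF0: "0 < card F" using subgroup.one_closed[OF subF] finF by (auto simp: card_gt_0_iff)
  define aq where "aq = card A div card F"
  have aqe: "aq = card (carrier ((GLgrp p d)\<lparr>carrier := A\<rparr> Mod F))"
    unfolding aq_def using cF0 by (simp add: LA[symmetric])
  have cA: "card A = aq * card F" using LA aqe by simp
  have "card F \<le> card A" using card_mono[OF finA FA] .
  hence aq1: "1 \<le> aq" using cA cF0 by (cases aq) auto
  have cF: "card F = t * card U" using LF iso t_def by simp
  have Es_sub: "Es i \<subseteq> carrier (GLgrp p d)" if "i < s" for i
    using Es_extra that subgroup.subset unfolding extraspecial_def by blast
  have finEs: "finite (Es i)" if "i < s" for i
    using finite_subset[OF Es_sub[OF that]] GL_finite[OF p0] carG by simp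
  have cent: "card (centre (GLgrp p d) (Es i)) = q i" if "i < s" for i
    using Es_extra that unfolding extraspecial_def by blast
  have cEs: "card (Es i) = q i ^ (2 * m i + 1)" if "i < s" for i
    using Es_extra that unfolding extraspecial_def by blast
  have qpos: "0 < q i" if "i < s" for i
    using Es_extra that unfolding extraspecial_def by (simp add: prime_gt_0_nat)
  have Zb: "(\<Prod>i<s. q i) \<le> card Z"
    unfolding Z_def by (rule G.centre_card_bound[OF E_prod Es_sub cent finEs])
  have bijE: "bij_betw (gprod (GLgrp p d) s) (Pi\<^sub>E {..<s} Es) E"
    using E_prod unfolding internal_direct_product_def by blast
  have cE: "card E = (\<Prod>i<s. q i ^ (2 * m i + 1))"
    using bij_betw_same_card[OF bijE] by (simp add: card_PiE cEs)
  also have "\<dots> = e ^ 2 * (\<Prod>i<s. q i)"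
    by (simp add: e_def prod_power_distrib prod.distrib[symmetric] power_add power_mult[symmetric] mult.commute)
  finally have cE': "card E = e ^ 2 * (\<Prod>i<s. q i)" .
  have qprod: "0 < (\<Prod>i<s. q i)" using qpos by (simp add: prod_pos)
  have te: "t \<le> e ^ 2"
  proof -
    have "t * (\<Prod>i<s. q i) \<le> t * card Z" using Zb by simp
    also have "\<dots> = e ^ 2 * (\<Prod>i<s. q i)" using LE cE' t_def by simp
    finally show ?thesis using qprod by simp
  qed
  have "p ^ 1 \<le> p ^ k" using p1 k_pos by (intro power_increasing) auto
  hence Wc2: "2 \<le> card W" using W_card p1 by simp
  have "0 < p ^ k - 1" using Wc2 W_card by simp
  hence Ub: "card U \<le> card W - 1" using dvd_imp_le[OF U_dvd] W_card by simp
  have oneG0: "restrict id (vecs p d) \<in> G0" using subgroup.one_closed[OF G0_sub] by (simp add: GLgrp_def)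
  obtain R where R: "R = rank_affine p d G0" by blast
  have orb: "card (vecs p d) - 1 \<le> (R - 1) * card G0" "1 \<le> R"
    using orbit_bound[OF p0 G0GL oneG0] R by auto
  define c where "c = card {g \<otimes>\<^bsub>GLgrp p d\<^esub> u \<otimes>\<^bsub>GLgrp p d\<^esub> inv\<^bsub>GLgrp p d\<^esub> g | g. g \<in> G0}"
  have e1: "1 \<le> e" using e_def qpos by (simp add: Suc_le_eq prod_pos)
  have G0b: "card G0 \<le> k * aq * e ^ 2 * (card W - 1)"
  proof -
    have "card G0 \<le> c * (aq * (t * card U))" using cnt cA cF c_def by simp
    also have "\<dots> \<le> k * (aq * (e ^ 2 * (card W - 1)))"
      using conjk te Ub c_def by (intro mult_le_mono mult_le_mono2) auto
    finally show ?thesis by (simp add: mult.assoc)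
  qed
  have Nb: "card W ^ e \<le> card (vecs p d)"
  proof -
    have "card W ^ e \<le> card W ^ (e * b)" using Wc2 b_pos by (intro power_increasing) auto
    thus ?thesis using V_card by simp
  qed
  have key: "card W ^ e - 1 \<le> (R - 1) * (k * aq * e ^ 2 * (card W - 1))"
  proof -
    have "card W ^ e - 1 \<le> card (vecs p d) - 1" using Nb by simp
    also have "\<dots> \<le> (R - 1) * card G0" using orb by simp
    also have "\<dots> \<le> (R - 1) * (k * aq * e ^ 2 * (card W - 1))" using G0b by simp
    finally show ?thesis .
  qed
  define L where "L = log 2 (real (card W))"
  have kL: "real k \<le> L"
  proof -
    have "L = real k * log 2 (real p)" unfolding L_def using W_card p0 by (simp add: log_nat_power)
    moreover have "1 \<le> log 2 (real p)" using p1 by simp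
    ultimately show ?thesis using mult_left_mono[of 1 "log 2 (real p)" "real k"] by simp
  qed
  define D where "D = L * real aq * real e ^ 2 * (real (card W) - 1)"
  have Wr: "1 \<le> real (card W) - 1" using Wc2 by simp
  have Dpos: "0 < D" unfolding D_def using kL k_pos aq1 e1 Wr by (intro mult_pos_pos) auto
  have "real (card W) ^ e - 1 = real (card W ^ e - 1)"
    using Wc2 by (simp add: of_nat_diff)
  also have "\<dots> \<le> real ((R - 1) * (k * aq * e ^ 2 * (card W - 1)))" using key by (rule of_nat_mono)
  also have "\<dots> = real (R - 1) * (real k * real aq * real e ^ 2 * (real (card W) - 1))"
    using Wc2 by (simp add: of_nat_diff)
  also have "\<dots> \<le> real (R - 1) * D"
    unfolding D_def using kL aq1 Wr by (intro mult_left_mono mult_right_mono) auto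
  finally have "(real (card W) ^ e - 1) / D \<le> real (R - 1)" using Dpos by (simp add: divide_le_eq mult.commute)
  hence "\<lceil>(real (card W) ^ e - 1) / D\<rceil> \<le> int (R - 1)" by (simp add: ceiling_le_iff)
  hence "\<lceil>(real (card W) ^ e - 1) / D\<rceil> + 1 \<le> int R" using orb by linarith
  thus ?thesis using R by (simp add: D_def L_def aq_def)
qed


end
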